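(* Let $n,k$ be positive integers and $c_1,\dots,c_n$ non-negative integers with $n=c_1+2c_2+\cdots+nc_n$, and let $\mathbf c=(c_1,\dots,c_n)$. Then the coefficient of $\dfrac{t_1^{c_1}\cdots t_n^{c_n}}{c_1!\cdots c_n!}$ in \[ \exp\Big(\sum_{\ell\ge1}\sum_{g\in G_k(\ell)}(-1)^{\ell g+1}\frac{\ell^{g-1}}{g}t_\ell^{g}\Big) \] equals $\operatorname{re}_k(\mathbf c)-\operatorname{ro}_k(\mathbf c)$.
   Context: $G_k(\ell)=\{g\in\mathbb N:\gcd(g\ell,k)=g\}$. The cycle type of $\sigma\in S_n$ is $(c_1,\dots,c_n)$ where $c_i$ is the number of $i$-cycles (fixed points count as $1$-cycles). $\operatorname{re}_k(\mathbf c)$ (resp. $\operatorname{ro}_k(\mathbf c)$) denotes the number of even (resp. odd) permutations $\tau\in S_n$ with $\tau^k=\sigma$, for any fixed $\sigma\in S_n$ of cycle type $\mathbf c$. *)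

theory Defs
  imports "HOL-Analysis.Analysis" "HOL-Library.Poly_Mapping" "HOL-Combinatorics.Combinatorics"
begin

text \<open>Multivariate (polynomial truncations of) power series in the variables t_1, t_2, ...:
  a monomial is a finitely supported exponent vector finitely supported map (variable index to exponent).\<close>
type_synonym mpoly = "(nat \<Rightarrow>\<^sub>0 nat) \<Rightarrow>\<^sub>0 real"

definition Gk :: "nat \<Rightarrow> nat \<Rightarrow> nat set" where
  "Gk k l = {g. gcd (g * l) k = g}"

definition genF :: "nat \<Rightarrow> nat \<Rightarrow> mpoly" where
  "genF k N = (\<Sum>l\<in>{1..N}. \<Sum>g\<in>Gk k l.
      Poly_Mapping.single (Poly_Mapping.single l g)
        ((-1) ^ (l * g + 1) * real l ^ (g - 1) / real g))"

definition exp_coeff :: "mpoly \<Rightarrow> (nat \<Rightarrow>\<^sub>0 nat) \<Rightarrow> real" where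
  "exp_coeff F m = suminf (\<lambda>j. Poly_Mapping.lookup (F ^ j) m / fact j)"

definition cycle_count :: "(nat \<Rightarrow> nat) \<Rightarrow> nat set \<Rightarrow> nat \<Rightarrow> nat" where
  "cycle_count \<sigma> S i = card {C. \<exists>x\<in>S. C = orbit \<sigma> x \<and> card C = i}"

end

theory Submission
  imports Defs
begin

abbreviation lk where "lk \<equiv> Poly_Mapping.lookup"
abbreviation ks where "ks \<equiv> Poly_Mapping.keys"

definition lepm :: "(nat \<Rightarrow>\<^sub>0 nat) \<Rightarrow> (nat \<Rightarrow>\<^sub>0 nat) \<Rightarrow> bool" where
  "lepm a m \<longleftrightarrow> (\<forall>i. lk a i \<le> lk m i)"

lemma add_eq_iff_pm: "(m = l + q) \<longleftrightarrow> (q = m - l \<and> lepm l m)"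
  for m l q :: "nat \<Rightarrow>\<^sub>0 nat"
proof
  assume "m = l + q" thus "q = m - l \<and> lepm l m"
    by (auto simp: lepm_def poly_mapping_eqI lookup_add lookup_minus)
next
  assume "q = m - l \<and> lepm l m" thus "m = l + q"
    by (auto simp: lepm_def lookup_add lookup_minus intro!: poly_mapping_eqI)
qed

lemma lookup_mult_pm:
  fixes P Q :: mpoly
  assumes "finite A" "ks P \<subseteq> A"
  shows "lk (P * Q) m = (\<Sum>a\<in>A. lk P a * (if lepm a m then lk Q (m - a) else 0))"
proof -
  have "lk (P * Q) m = (\<Sum>l. lk P l * (\<Sum>q. lk Q q when m = l + q))"
    by (rule lookup_mult)
  also have "\<dots> = (\<Sum>l. lk P l * (if lepm l m then lk Q (m - l) else 0))"
  proof -
    have "(\<Sum>q. lk Q q when m = l + q) = (if lepm l m then lk Q (m - l) else 0)" for l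
      unfolding add_eq_iff_pm
      by (cases "lepm l m") (simp_all add: when_def)
    thus ?thesis by simp
  qed
  also have "\<dots> = (\<Sum>a\<in>A. lk P a * (if lepm a m then lk Q (m - a) else 0))"
    apply (rule Sum_any.expand_superset)
    using assms by (auto simp: in_keys_iff)
  finally show ?thesis .
qed

definition Eop :: "nat \<Rightarrow> mpoly \<Rightarrow> mpoly" where
  "Eop l P = (\<Sum>a\<in>ks P. Poly_Mapping.single a (real (lk a l) * lk P a))"

lemma lookup_Eop: "lk (Eop l P) m = real (lk m l) * lk P m"
  unfolding Eop_def lookup_sum lookup_single
  by (cases "m \<in> ks P") (auto simp: when_def in_keys_iff)

lemma keys_Eop: "ks (Eop l P) \<subseteq> ks P"
  by (auto simp: in_keys_iff lookup_Eop)

lemma Eop_mult: "Eop l (P * Q) = Eop l P * Q + P * Eop l Q"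
proof (rule poly_mapping_eqI)
  fix m
  have fk: "finite (ks P)" by simp
  have L: "lk (Eop l (P * Q)) m = (\<Sum>a\<in>ks P. real (lk m l) * (lk P a * (if lepm a m then lk Q (m - a) else 0)))"
    by (simp add: lookup_Eop lookup_mult_pm[OF fk order_refl] sum_distrib_left)
  have R1: "lk (Eop l P * Q) m = (\<Sum>a\<in>ks P. lk (Eop l P) a * (if lepm a m then lk Q (m - a) else 0))"
    by (rule lookup_mult_pm[OF fk keys_Eop])
  have R2: "lk (P * Eop l Q) m = (\<Sum>a\<in>ks P. lk P a * (if lepm a m then lk (Eop l Q) (m - a) else 0))"
    by (rule lookup_mult_pm[OF fk order_refl])
  show "lk (Eop l (P * Q)) m = lk (Eop l P * Q + P * Eop l Q) m"
    unfolding lookup_add L R1 R2 sum.distrib[symmetric]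
  proof (rule sum.cong[OF refl])
    fix a assume "a \<in> ks P"
    show "real (lk m l) * (lk P a * (if lepm a m then lk Q (m - a) else 0)) =
      lk (Eop l P) a * (if lepm a m then lk Q (m - a) else 0) +
      lk P a * (if lepm a m then lk (Eop l Q) (m - a) else 0)"
    proof (cases "lepm a m")
      case True
      hence "lk m l = lk a l + lk (m - a) l"
        by (auto simp: lepm_def lookup_minus)
      then show ?thesis using True by (simp add: lookup_Eop algebra_simps)
    qed (simp)
  qed
qed

lemma Eop_add: "Eop l (P + Q) = Eop l P + Eop l Q"
  by (rule poly_mapping_eqI) (simp add: lookup_Eop lookup_add algebra_simps)

lemma Eop_zero[simp]: "Eop l 0 = 0"
  by (rule poly_mapping_eqI) (simp add: lookup_Eop)

lemma Eop_of_nat_mult: "Eop l (of_nat n * P) = of_nat n * Eop l P"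
  by (induction n) (simp_all add: Eop_add algebra_simps)

lemma Eop_pow: "Eop l (P ^ Suc j) = of_nat (Suc j) * (Eop l P * P ^ j)"
proof (induction j)
  case 0 then show ?case by simp
next
  case (Suc j)
  have "Eop l (P ^ Suc (Suc j)) = Eop l (P * P ^ Suc j)" by simp
  also have "\<dots> = Eop l P * P ^ Suc j + P * (of_nat (Suc j) * (Eop l P * P ^ j))"
    by (simp only: Eop_mult Suc)
  also have "\<dots> = of_nat (Suc (Suc j)) * (Eop l P * P ^ Suc j)"
    by (simp add: algebra_simps)
  finally show ?case .
qed

lemma lookup_of_nat_mult: "lk (of_nat n * P) m = real n * lk P m" for P :: mpoly
  by (induction n) (simp_all add: lookup_add algebra_simps)

lemma coeff_pow_rec: "real (lk m l) * lk (P ^ Suc j) m = real (Suc j) * lk (Eop l P * P ^ j) m"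
proof -
  have "real (lk m l) * lk (P ^ Suc j) m = lk (Eop l (P ^ Suc j)) m" by (simp only: lookup_Eop)
  also have "\<dots> = lk (of_nat (Suc j) * (Eop l P * P ^ j)) m" by (simp only: Eop_pow)
  also have "\<dots> = real (Suc j) * lk (Eop l P * P ^ j) m" by (rule lookup_of_nat_mult)
  finally show ?thesis .
qed

definition deg :: "(nat \<Rightarrow>\<^sub>0 nat) \<Rightarrow> nat" where
  "deg m = (\<Sum>i\<in>ks m. lk m i)"

lemma deg_superset: "finite A \<Longrightarrow> ks m \<subseteq> A \<Longrightarrow> deg m = (\<Sum>i\<in>A. lk m i)"
  unfolding deg_def by (rule sum.mono_neutral_left) (auto simp: in_keys_iff)

lemma deg_add: "deg (a + b) = deg a + deg b"
proof -
  let ?A = "ks a \<union> ks b"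
  have "ks (a + b) \<subseteq> ?A" by (auto simp: in_keys_iff lookup_add)
  then have "deg (a + b) = (\<Sum>i\<in>?A. lk (a + b) i)" by (intro deg_superset) auto
  also have "\<dots> = (\<Sum>i\<in>?A. lk a i) + (\<Sum>i\<in>?A. lk b i)" by (simp add: lookup_add sum.distrib)
  also have "\<dots> = deg a + deg b"
    using deg_superset[of ?A a] deg_superset[of ?A b] by auto
  finally show ?thesis .
qed

lemma deg_pos: "a \<noteq> 0 \<Longrightarrow> deg a > 0"
proof -
  assume "a \<noteq> 0"
  then obtain i where "lk a i \<noteq> 0" using poly_mapping_eqI[of a 0] by auto
  then have "i \<in> ks a" by (simp add: in_keys_iff)
  then show ?thesis unfolding deg_def using \<open>lk a i \<noteq> 0\<close>
    by (metis finite_keys gr_zeroI sum_eq_0_iff)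
qed

lemma lepm_split: "lepm a m \<Longrightarrow> m = a + (m - a)"
  using add_eq_iff_pm by blast

lemma pow_coeff_zero:
  fixes F :: mpoly
  assumes F0: "lk F 0 = 0" and nz: "lk (F ^ j) m \<noteq> 0"
  shows "j \<le> deg m"
  using nz
proof (induction j arbitrary: m)
  case 0 then show ?case by simp
next
  case (Suc j)
  have eqn: "lk (F ^ Suc j) m = (\<Sum>a\<in>ks F. lk F a * (if lepm a m then lk (F ^ j) (m - a) else 0))"
    by (simp add: lookup_mult_pm)
  have "(\<Sum>a\<in>ks F. lk F a * (if lepm a m then lk (F ^ j) (m - a) else 0)) \<noteq> 0"
    using Suc.prems unfolding eqn .
  then obtain a where a0: "a \<in> ks F" and
     nz: "lk F a * (if lepm a m then lk (F ^ j) (m - a) else 0) \<noteq> 0"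
    by (rule sum.not_neutral_contains_not_neutral)
  from nz have a: "a \<in> ks F" "lepm a m" "lk (F ^ j) (m - a) \<noteq> 0" using a0 by (auto split: if_splits)
  have "a \<noteq> 0" using a(1) F0 by (auto simp: in_keys_iff)
  have "j \<le> deg (m - a)" using Suc.IH a(3) by blast
  moreover have "deg m = deg a + deg (m - a)" using lepm_split[OF a(2)] deg_add by metis
  ultimately show ?case using deg_pos[OF \<open>a \<noteq> 0\<close>] by linarith
qed

lemma exp_coeff_finite:
  fixes F :: mpoly
  assumes F0: "lk F 0 = 0" and D: "deg m \<le> D"
  shows "exp_coeff F m = (\<Sum>j\<le>D. lk (F ^ j) m / fact j)"
  unfolding exp_coeff_def
proof (rule suminf_finite)
  fix j assume "j \<notin> {..D}"
  then have "\<not> j \<le> deg m" using D by auto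
  then show "lk (F ^ j) m / fact j = 0" using pow_coeff_zero[OF F0, of j m] by auto
qed simp

lemma exp_rec:
  fixes F :: mpoly
  assumes F0: "lk F 0 = 0" and ml: "lk m l \<ge> 1" and A: "finite A" "ks F \<subseteq> A"
  shows "real (lk m l) * exp_coeff F m =
     (\<Sum>a\<in>A. lk (Eop l F) a * (if lepm a m then exp_coeff F (m - a) else 0))"
proof -
  define D where "D = deg m"
  have m0: "m \<noteq> 0" using ml by (auto)
  have "D > 0" using deg_pos[OF m0] D_def by simp
  then obtain D' where D': "D = Suc D'" using gr0_implies_Suc by blast
  have "real (lk m l) * exp_coeff F m = (\<Sum>j\<le>D. real (lk m l) * lk (F ^ j) m / fact j)"
    by (simp only: exp_coeff_finite[OF F0 order_refl] D_def sum_distrib_left times_divide_eq_right)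
  also have "\<dots> = (\<Sum>j<D. real (lk m l) * lk (F ^ Suc j) m / fact (Suc j))"
    unfolding D' atMost_Suc_eq_insert_0 lessThan_Suc_atMost
    using m0 by (simp add: sum.reindex lookup_one)
  also have "\<dots> = (\<Sum>j<D. lk (Eop l F * F ^ j) m / fact j)"
    by (rule sum.cong[OF refl], subst coeff_pow_rec, simp only: fact_Suc,
        rule nonzero_mult_divide_mult_cancel_left, simp del: of_nat_Suc)
  also have "\<dots> = (\<Sum>j<D. \<Sum>a\<in>A. lk (Eop l F) a * (if lepm a m then lk (F ^ j) (m - a) else 0) / fact j)"
  proof (rule sum.cong[OF refl])
    fix j
    have ksA: "ks (Eop l F) \<subseteq> A" using keys_Eop A(2) by blast
    show "lk (Eop l F * F ^ j) m / fact j = (\<Sum>a\<in>A. lk (Eop l F) a * (if lepm a m then lk (F ^ j) (m - a) else 0) / fact j)"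
      by (simp only: lookup_mult_pm[OF A(1) ksA] sum_divide_distrib)
  qed
  also have "\<dots> = (\<Sum>a\<in>A. \<Sum>j<D. lk (Eop l F) a * (if lepm a m then lk (F ^ j) (m - a) else 0) / fact j)"
    by (rule sum.swap)
  also have "\<dots> = (\<Sum>a\<in>A. lk (Eop l F) a * (if lepm a m then (\<Sum>j<D. lk (F ^ j) (m - a) / fact j) else 0))"
  proof (rule sum.cong[OF refl])
    fix a
    show "(\<Sum>j<D. lk (Eop l F) a * (if lepm a m then lk (F ^ j) (m - a) else 0) / fact j) =
      lk (Eop l F) a * (if lepm a m then (\<Sum>j<D. lk (F ^ j) (m - a) / fact j) else 0)"
      by (cases "lepm a m") (simp_all add: sum_distrib_left)
  qed
  also have "\<dots> = (\<Sum>a\<in>A. lk (Eop l F) a * (if lepm a m then exp_coeff F (m - a) else 0))"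
  proof (rule sum.cong[OF refl])
    fix a assume "a \<in> A"
    show "lk (Eop l F) a * (if lepm a m then (\<Sum>j<D. lk (F ^ j) (m - a) / fact j) else 0) =
          lk (Eop l F) a * (if lepm a m then exp_coeff F (m - a) else 0)"
    proof (cases "lk (Eop l F) a = 0 \<or> \<not> lepm a m")
      case False
      then have "a \<noteq> 0" using F0 by (auto simp: lookup_Eop)
      moreover have "deg m = deg a + deg (m - a)" using False lepm_split deg_add by metis
      ultimately have "deg (m - a) \<le> D'" using deg_pos D' D_def by fastforce
      then have "exp_coeff F (m - a) = (\<Sum>j\<le>D'. lk (F ^ j) (m - a) / fact j)"
        by (rule exp_coeff_finite[OF F0])
      then show ?thesis using False by (simp add: D' lessThan_Suc_atMost)
    qed auto
  qed
  finally show ?thesis .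
qed

definition w :: "nat \<Rightarrow> nat \<Rightarrow> real" where
  "w l g = (-1) ^ (l * g + 1) * real l ^ (g - 1) / real g"

lemma Gk_props: "k > 0 \<Longrightarrow> g \<in> Gk k l \<Longrightarrow> g dvd k \<and> 0 < g"
proof -
  assume k: "k > 0" and g: "g \<in> Gk k l"
  then have e: "gcd (g * l) k = g" by (simp add: Gk_def)
  have "g dvd k" using gcd_dvd2[of "g * l" k] e by simp
  moreover have "g \<noteq> 0"
  proof
    assume "g = 0"
    then have "gcd (g * l) k = k" by simp
    with e k \<open>g = 0\<close> show False by simp
  qed
  ultimately show ?thesis by simp
qed

lemma Gk_finite: "k > 0 \<Longrightarrow> finite (Gk k l)"
proof (rule finite_subset[of _ "{..k}"])
  assume k: "k > 0"
  show "Gk k l \<subseteq> {..k}"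
  proof
    fix x assume "x \<in> Gk k l"
    then have "x dvd k" using Gk_props k by blast
    then show "x \<in> {..k}" using dvd_imp_le k by auto
  qed
qed simp

lemma lookup_genF: "lk (genF k N) a = (\<Sum>l'\<in>{1..N}. \<Sum>g\<in>Gk k l'. if Poly_Mapping.single l' g = a then w l' g else 0)"
  unfolding genF_def w_def lookup_sum lookup_single when_def by simp

lemma single_nz: "g > 0 \<Longrightarrow> Poly_Mapping.single l g \<noteq> (0::nat \<Rightarrow>\<^sub>0 nat)"
  by (metis lookup_single_eq lookup_zero neq0_conv)

lemma genF0: "k > 0 \<Longrightarrow> lk (genF k N) 0 = 0"
  unfolding lookup_genF using Gk_props single_nz by (auto intro!: sum.neutral)

lemma lepm_single: "lepm (Poly_Mapping.single l g) m \<longleftrightarrow> g \<le> lk m l"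
  unfolding lepm_def lookup_single when_def by (metis le0 order_refl)

lemma genF_rec:
  assumes k: "k > 0" and l: "1 \<le> l" "l \<le> N" and ml: "lk m l \<ge> 1"
  shows "real (lk m l) * exp_coeff (genF k N) m =
    (\<Sum>g\<in>Gk k l. real g * w l g * (if g \<le> lk m l then exp_coeff (genF k N) (m - Poly_Mapping.single l g) else 0))"
proof -
  define F where "F = genF k N"
  define B where "B = (\<Union>l'\<in>{1..N}. (\<lambda>g. Poly_Mapping.single l' g) ` Gk k l')"
  define A where "A = ks F \<union> B"
  define f where "f a = (if lepm a m then exp_coeff F (m - a) else 0)" for a
  have fA: "finite A" unfolding A_def B_def using Gk_finite[OF k] by auto
  have "real (lk m l) * exp_coeff F m = (\<Sum>a\<in>A. lk (Eop l F) a * f a)"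
    unfolding f_def by (rule exp_rec) (use genF0[OF k] ml fA in \<open>auto simp: F_def A_def\<close>)
  also have "\<dots> = (\<Sum>a\<in>A. \<Sum>l'\<in>{1..N}. \<Sum>g\<in>Gk k l'. if Poly_Mapping.single l' g = a then real (lk a l) * w l' g * f a else 0)"
    unfolding lookup_Eop F_def lookup_genF
    by (simp add: sum_distrib_left sum_distrib_right if_distrib if_distribR cong: if_cong)
  also have "\<dots> = (\<Sum>l'\<in>{1..N}. \<Sum>g\<in>Gk k l'. \<Sum>a\<in>A. if Poly_Mapping.single l' g = a then real (lk a l) * w l' g * f a else 0)"
    by (subst sum.swap, rule sum.cong[OF refl], rule sum.swap)
  also have "\<dots> = (\<Sum>l'\<in>{1..N}. \<Sum>g\<in>Gk k l'. real (lk (Poly_Mapping.single l' g) l) * w l' g * f (Poly_Mapping.single l' g))"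
  proof (intro sum.cong[OF refl])
    fix l' g assume "l' \<in> {1..N}" "g \<in> Gk k l'"
    then have "Poly_Mapping.single l' g \<in> A" unfolding A_def B_def by auto
    then show "(\<Sum>a\<in>A. if Poly_Mapping.single l' g = a then real (lk a l) * w l' g * f a else 0) =
      real (lk (Poly_Mapping.single l' g) l) * w l' g * f (Poly_Mapping.single l' g)"
      using fA by (simp add: sum.delta)
  qed
  also have "\<dots> = (\<Sum>l'\<in>{1..N}. if l' = l then (\<Sum>g\<in>Gk k l. real g * w l g * f (Poly_Mapping.single l g)) else 0)"
    by (rule sum.cong[OF refl]) (auto simp: lookup_single when_def intro!: sum.neutral)
  also have "\<dots> = (\<Sum>g\<in>Gk k l. real g * w l g * f (Poly_Mapping.single l g))"
    using l by (simp add: sum.delta')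
  finally show ?thesis unfolding F_def f_def lepm_single .
qed

definition pf :: "(nat \<Rightarrow>\<^sub>0 nat) \<Rightarrow> real" where
  "pf m = (\<Prod>i\<in>ks m. fact (lk m i))"

lemma pf_superset: "finite K \<Longrightarrow> ks m \<subseteq> K \<Longrightarrow> pf m = (\<Prod>i\<in>K. fact (lk m i))"
  unfolding pf_def by (rule prod.mono_neutral_left) (auto simp: in_keys_iff)

definition cf :: "nat \<Rightarrow> nat \<Rightarrow> nat \<Rightarrow> real" where
  "cf l c g = (-1) ^ (l * g + 1) * real l ^ (g - 1) * (fact (c - 1) / fact (c - g))"

definition aco :: "nat \<Rightarrow> nat \<Rightarrow> (nat \<Rightarrow>\<^sub>0 nat) \<Rightarrow> real" where
  "aco k N m = exp_coeff (genF k N) m * pf m"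

lemma aco_rec:
  assumes k: "k > 0" and l: "1 \<le> l" "l \<le> N" and ml: "lk m l \<ge> 1"
  shows "aco k N m = (\<Sum>g\<in>Gk k l. if g \<le> lk m l then cf l (lk m l) g * aco k N (m - Poly_Mapping.single l g) else 0)"
proof -
  define c where "c = lk m l"
  define K where "K = ks m"
  define P' where "P' = (\<Prod>i\<in>K - {l}. fact (lk m i) :: real)"
  define e where "e = exp_coeff (genF k N)"
  have lK: "l \<in> K" using ml by (simp add: K_def in_keys_iff)
  have fK: "finite K" by (simp add: K_def)
  have pfm: "pf m = fact c * P'"
    using pf_superset[OF fK] lK fK by (simp add: K_def P'_def c_def prod.remove)
  have pfm': "pf (m - Poly_Mapping.single l g) = fact (c - g) * P'" for g
  proof -
    have "ks (m - Poly_Mapping.single l g) \<subseteq> K"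
      by (auto simp: K_def in_keys_iff lookup_minus)
    then have "pf (m - Poly_Mapping.single l g) = (\<Prod>i\<in>K. fact (lk (m - Poly_Mapping.single l g) i))"
      by (rule pf_superset[OF fK])
    also have "\<dots> = fact (c - g) * (\<Prod>i\<in>K - {l}. fact (lk (m - Poly_Mapping.single l g) i))"
      using lK fK by (simp add: prod.remove lookup_minus c_def)
    also have "(\<Prod>i\<in>K - {l}. fact (lk (m - Poly_Mapping.single l g) i)) = P'"
      unfolding P'_def by (rule prod.cong) (auto simp: lookup_minus lookup_single)
    finally show ?thesis .
  qed
  have c1: "c \<ge> 1" using ml c_def by simp
  have rec: "real c * e m = (\<Sum>g\<in>Gk k l. real g * w l g * (if g \<le> c then e (m - Poly_Mapping.single l g) else 0))"
    using genF_rec[OF k l ml] unfolding c_def e_def by simp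
  have "aco k N m = fact (c - 1) * P' * (real c * e m)"
    using c1 by (simp add: aco_def e_def pfm fact_reduce[of c])
  also have "\<dots> = (\<Sum>g\<in>Gk k l. fact (c - 1) * P' * (real g * w l g * (if g \<le> c then e (m - Poly_Mapping.single l g) else 0)))"
    by (simp add: rec sum_distrib_left)
  also have "\<dots> = (\<Sum>g\<in>Gk k l. if g \<le> c then cf l c g * aco k N (m - Poly_Mapping.single l g) else 0)"
  proof (rule sum.cong[OF refl])
    fix g assume g: "g \<in> Gk k l"
    then have g0: "g > 0" using Gk_props k by blast
    have "real g * w l g = (-1) ^ (l * g + 1) * real l ^ (g - 1)" using g0 by (simp add: w_def)
    moreover have "fact (c - g) \<noteq> (0::real)" by simp
    ultimately show "fact (c - 1) * P' * (real g * w l g * (if g \<le> c then e (m - Poly_Mapping.single l g) else 0)) =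
       (if g \<le> c then cf l c g * aco k N (m - Poly_Mapping.single l g) else 0)"
      by (simp add: cf_def aco_def pfm' e_def)
  qed
  finally show ?thesis unfolding c_def[symmetric] .
qed

lemma aco_zero: "k > 0 \<Longrightarrow> aco k N 0 = 1"
proof -
  assume k: "k > 0"
  have "exp_coeff (genF k N) 0 = (\<Sum>j\<le>0. lk (genF k N ^ j) 0 / fact j)"
    by (rule exp_coeff_finite[OF genF0[OF k]]) (simp add: deg_def)
  then show ?thesis by (simp add: aco_def pf_def lookup_one)
qed

lemma perm_of_permutes: "p permutes S \<Longrightarrow> finite S \<Longrightarrow> permutation p"
  using permutation_permutes by blast

lemma orbit_eq_range: "permutation p \<Longrightarrow> orbit p y = range (\<lambda>n. (p ^^ n) y)"
  by (simp add: orbit_altdef_permutation full_SetCompr_eq)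

lemma card_orbit_lp: "permutation p \<Longrightarrow> card (orbit p y) = least_power p y"
proof -
  assume p: "permutation p"
  have "orbit p y = set (support p y)" using support_set[OF p] orbit_eq_range[OF p] by simp
  then show ?thesis using cycle_of_permutation[OF p] distinct_card by fastforce
qed

lemma orbit_period: "permutation p \<Longrightarrow> ((p ^^ n) y = y) \<longleftrightarrow> card (orbit p y) dvd n"
  using least_power_dvd card_orbit_lp by metis

lemma funpow_mod_eq: "permutation p \<Longrightarrow> ((p ^^ a) y = (p ^^ b) y) \<longleftrightarrow> a mod card (orbit p y) = b mod card (orbit p y)"
proof -
  assume p: "permutation p"
  have key: "((p ^^ a) y = (p ^^ b) y) \<longleftrightarrow> a mod card (orbit p y) = b mod card (orbit p y)" if ab: "a \<le> b" for a b
  proof -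
    have inj: "inj (p ^^ a)" using permutation_funpow[OF p] by (simp add: permutation bij_is_inj)
    have "(p ^^ b) y = (p ^^ a) ((p ^^ (b - a)) y)" using ab
      by (metis add_diff_inverse_nat funpow_add not_le o_apply)
    then have "((p ^^ a) y = (p ^^ b) y) \<longleftrightarrow> (p ^^ (b - a)) y = y"
      using inj by (metis injD)
    also have "\<dots> \<longleftrightarrow> card (orbit p y) dvd (b - a)" by (rule orbit_period[OF p])
    also have "\<dots> \<longleftrightarrow> a mod card (orbit p y) = b mod card (orbit p y)"
      using ab by (metis mod_eq_dvd_iff_nat)
    finally show ?thesis .
  qed
  show ?thesis
  proof (cases "a \<le> b")
    case True then show ?thesis using key by blast
  next
    case False then show ?thesis using key[of b a] by (metis nat_le_linear)
  qed
qed

lemma orbit_card_pos: "permutation p \<Longrightarrow> card (orbit p y) > 0"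
  using card_orbit_lp least_power_of_permutation(2) by metis

lemma self_in_orbit': "permutation p \<Longrightarrow> y \<in> orbit p y"
  by (rule permutation_self_in_orbit)

lemma orbit_eq_of_mem: "permutation p \<Longrightarrow> z \<in> orbit p y \<Longrightarrow> orbit p z = orbit p y"
  by (metis cyclic_on_orbit' orbit_cyclic_eq3)

lemma orbits_disj: "permutation p \<Longrightarrow> orbit p y \<noteq> orbit p z \<Longrightarrow> orbit p y \<inter> orbit p z = {}"
  by (metis Int_emptyI orbit_eq_of_mem)

lemma funpow_in_orbit': "permutation p \<Longrightarrow> (p ^^ n) y \<in> orbit p y"
  using orbit_eq_range by fastforce

definition sg :: "('a \<Rightarrow> 'a) \<Rightarrow> real" where
  "sg p = (if evenperm p then 1 else -1)"

lemma sg_comp: "permutation p \<Longrightarrow> permutation q \<Longrightarrow> sg (p \<circ> q) = sg p * sg q"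
  by (simp add: sg_def evenperm_comp)

lemma sg_cycle_of_list: "distinct cs \<Longrightarrow> cs \<noteq> [] \<Longrightarrow> sg (cycle_of_list cs) = (-1) ^ (length cs + 1)"
proof (induction cs rule: cycle_of_list.induct)
  case (1 i j cs)
  have "sg (cycle_of_list (i # j # cs)) = sg (Transposition.transpose i j) * sg (cycle_of_list (j # cs))"
    by (simp add: sg_comp permutation_of_cycle permutation_swap_id)
  also have "sg (Transposition.transpose i j) = -1" using "1.prems" by (simp add: sg_def evenperm_swap)
  finally show ?case using 1 by simp
next
  case ("2_1") then show ?case by simp
next
  case ("2_2" v) then show ?case by (simp add: sg_def)
qed

lemma single_cycle_eq:
  assumes p: "p permutes T" and fT: "finite T" and orb: "orbit p x = T"
  shows "p = cycle_of_list (support p x)" and "length (support p x) = card T"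
proof -
  have pp: "permutation p" using perm_of_permutes[OF p fT] .
  have setsup: "set (support p x) = T" using support_set[OF pp] orbit_eq_range[OF pp] orb by simp
  show "p = cycle_of_list (support p x)"
  proof
    fix b show "p b = cycle_of_list (support p x) b"
    proof (cases "b \<in> T")
      case True then show ?thesis using cycle_restrict[OF pp] setsup by blast
    next
      case False then show ?thesis using id_outside_supp[of b "support p x"] setsup p
        by (simp add: permutes_not_in)
    qed
  qed
  show "length (support p x) = card T" using card_orbit_lp[OF pp, of x] orb by simp
qed

lemma sg_single_cycle:
  assumes p: "p permutes T" and fT: "finite T" and orb: "orbit p x = T"
  shows "sg p = (-1) ^ (card T + 1)"
proof -
  have pp: "permutation p" using perm_of_permutes[OF p fT] .
  have "support p x \<noteq> []" using single_cycle_eq(2)[OF assms] orbit_card_pos[OF pp, of x] orb by auto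
  then show ?thesis using sg_cycle_of_list[OF cycle_of_permutation[OF pp]] single_cycle_eq[OF assms] by metis
qed

definition inv_set :: "('a \<Rightarrow> 'a) \<Rightarrow> 'a set \<Rightarrow> bool" where
  "inv_set f T \<longleftrightarrow> (\<forall>y\<in>T. f y \<in> T)"

lemma perm_restrict_funpow: "inv_set f T \<Longrightarrow> (perm_restrict f T) ^^ n = perm_restrict (f ^^ n) T"
proof (induction n)
  case 0 then show ?case by (auto simp: perm_restrict_def)
next
  case (Suc n)
  have inv: "y \<in> T \<Longrightarrow> (f ^^ n) y \<in> T" for y
    by (induction n) (use Suc.prems in \<open>auto simp: inv_set_def\<close>)
  show ?case using Suc inv by (auto simp: perm_restrict_def fun_eq_iff)
qed

lemma perm_restrict_permutes:
  assumes p: "p permutes S" and fS: "finite S" and TS: "T \<subseteq> S" and inv: "inv_set p T"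
  shows "perm_restrict p T permutes T"
proof -
  have fT: "finite T" using fS TS finite_subset by blast
  have injT: "inj_on p T" using permutes_inj[OF p] by (simp add: inj_on_def inj_def)
  have sub: "p ` T \<subseteq> T" using inv by (auto simp: inv_set_def)
  have img: "p ` T = T" using endo_inj_surj[OF fT sub injT] .
  show ?thesis unfolding permutes_def
  proof (intro conjI allI impI)
    fix y assume "y \<notin> T" then show "perm_restrict p T y = y" by (simp add: perm_restrict_def)
  next
    fix y show "\<exists>!z. perm_restrict p T z = y"
    proof (cases "y \<in> T")
      case True
      then obtain z where z: "z \<in> T" "p z = y" using img by (metis imageE)
      show ?thesis
      proof (rule ex1I[of _ z])
        show "perm_restrict p T z = y" using z by (simp add: perm_restrict_def)
      next
        fix z' assume "perm_restrict p T z' = y"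
        then show "z' = z" using z True injT by (auto simp: perm_restrict_def split: if_splits dest: inj_onD)
      qed
    next
      case False
      show ?thesis
      proof (rule ex1I[of _ y])
        show "perm_restrict p T y = y" using False by (simp add: perm_restrict_def)
      next
        fix z' assume "perm_restrict p T z' = y"
        then show "z' = y" using False inv by (auto simp: perm_restrict_def inv_set_def split: if_splits)
      qed
    qed
  qed
qed

lemma inv_set_compl:
  assumes p: "p permutes S" and fS: "finite S" and TS: "T \<subseteq> S" and inv: "inv_set p T"
  shows "inv_set p (S - T)"
proof -
  have fT: "finite T" using fS TS finite_subset by blast
  have injT: "inj_on p T" using permutes_inj[OF p] by (simp add: inj_on_def inj_def)
  have sub: "p ` T \<subseteq> T" using inv by (auto simp: inv_set_def)
  have img: "p ` T = T" using endo_inj_surj[OF fT sub injT] .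
  show ?thesis unfolding inv_set_def
  proof
    fix y assume y: "y \<in> S - T"
    have "y \<in> S" using y by simp
    then have "p y \<in> S" using permutes_in_image[OF p] by simp
    moreover have "p y \<notin> T"
    proof
      assume "p y \<in> T"
      then obtain z where z: "z \<in> T" "p z = p y" using img by (metis imageE)
      then have "z = y" using permutes_inj[OF p] by (simp add: inj_eq)
      then show False using y z by auto
    qed
    ultimately show "p y \<in> S - T" by blast
  qed
qed

lemma comp_funpow_commute:
  assumes fg: "f \<circ> g = g \<circ> f"
  shows "(f \<circ> g) ^^ n = (f ^^ n) \<circ> (g ^^ n)"
proof -
  have fg': "f (g x) = g (f x)" for x using fg by (metis comp_apply)
  have c: "g ((f ^^ n) x) = (f ^^ n) (g x)" for n x
    by (induction n) (simp_all add: fg'[symmetric])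
  have "((f \<circ> g) ^^ n) x = (f ^^ n) ((g ^^ n) x)" for x
    by (induction n) (simp_all add: c)
  then show ?thesis by (simp add: fun_eq_iff)
qed

definition roots :: "nat \<Rightarrow> 'a set \<Rightarrow> ('a \<Rightarrow> 'a) \<Rightarrow> ('a \<Rightarrow> 'a) set" where
  "roots k S \<sigma> = {\<tau>. \<tau> permutes S \<and> \<tau> ^^ k = \<sigma>}"

definition Rs :: "nat \<Rightarrow> 'a set \<Rightarrow> ('a \<Rightarrow> 'a) \<Rightarrow> real" where
  "Rs k S \<sigma> = (\<Sum>\<tau>\<in>roots k S \<sigma>. sg \<tau>)"

definition XT :: "nat \<Rightarrow> 'a set \<Rightarrow> ('a \<Rightarrow> 'a) \<Rightarrow> 'a \<Rightarrow> ('a \<Rightarrow> 'a) set" where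
  "XT k T \<sigma> x = {\<tau>. \<tau> permutes T \<and> orbit \<tau> x = T \<and> \<tau> ^^ k = perm_restrict \<sigma> T}"

lemma finite_roots: "finite S \<Longrightarrow> finite (roots k S \<sigma>)"
  by (rule finite_subset[OF _ finite_permutations[of S]]) (auto simp: roots_def)

lemma finite_XT: "finite T \<Longrightarrow> finite (XT k T \<sigma> x)"
  by (rule finite_subset[OF _ finite_permutations[of T]]) (auto simp: XT_def)

lemma permutes_inv_set: "p permutes T \<Longrightarrow> inv_set p T"
  by (simp add: inv_set_def permutes_in_image)

lemma decomp:
  assumes fS: "finite S" and \<sigma>: "\<sigma> permutes S" and TS: "T \<subseteq> S" and xT: "x \<in> T"
  shows "(\<Sum>\<tau>\<in>{\<tau>\<in>roots k S \<sigma>. orbit \<tau> x = T}. sg \<tau>) =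
         (\<Sum>\<tau>\<in>XT k T \<sigma> x. sg \<tau>) * Rs k (S - T) (perm_restrict \<sigma> (S - T))"
proof -
  let ?A = "XT k T \<sigma> x" and ?B = "roots k (S - T) (perm_restrict \<sigma> (S - T))"
  let ?h = "\<lambda>(a, b). (a \<circ> b :: 'a \<Rightarrow> 'a)"
  have fT: "finite T" using fS TS finite_subset by blast
  have fST: "finite (S - T)" using fS by simp
  have prop1: "a \<circ> b \<in> roots k S \<sigma> \<and> orbit (a \<circ> b) x = T \<and> sg (a \<circ> b) = sg a * sg b
     \<and> perm_restrict (a \<circ> b) T = a \<and> perm_restrict (a \<circ> b) (S - T) = b"
    if a: "a \<in> ?A" and b: "b \<in> ?B" for a b
  proof -
    have ap: "a permutes T" and ao: "orbit a x = T" and ak: "a ^^ k = perm_restrict \<sigma> T"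
      using a by (auto simp: XT_def)
    have bp: "b permutes (S - T)" and bk: "b ^^ k = perm_restrict \<sigma> (S - T)"
      using b by (auto simp: roots_def)
    have aT: "y \<in> T \<Longrightarrow> a y \<in> T" for y using permutes_in_image[OF ap] by simp
    have bT: "y \<in> S - T \<Longrightarrow> b y \<in> S - T" for y using permutes_in_image[OF bp] by simp
    have aout: "y \<notin> T \<Longrightarrow> a y = y" for y using permutes_not_in[OF ap] by simp
    have bout: "y \<notin> S - T \<Longrightarrow> b y = y" for y using permutes_not_in[OF bp] by simp
    have \<sigma>T: "y \<in> T \<Longrightarrow> \<sigma> y \<in> T" for y
      using permutes_funpow[OF ap, of k] ak permutes_in_image by (metis perm_restrict_simps(1))
    have \<sigma>ST: "y \<in> S - T \<Longrightarrow> \<sigma> y \<in> S - T" for y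
      using permutes_funpow[OF bp, of k] bk permutes_in_image by (metis perm_restrict_simps(1))
    have \<sigma>ST': "y \<in> S \<Longrightarrow> y \<notin> T \<Longrightarrow> \<sigma> y \<notin> T" for y using \<sigma>ST by blast
    have bT': "y \<in> S \<Longrightarrow> y \<notin> T \<Longrightarrow> b y \<notin> T" for y using bT by blast
    have \<sigma>out: "y \<notin> S \<Longrightarrow> \<sigma> y = y" for y using permutes_not_in[OF \<sigma>] by simp
    have comm: "a \<circ> b = b \<circ> a"
    proof
      fix y show "(a \<circ> b) y = (b \<circ> a) y"
        by (cases "y \<in> T"; cases "y \<in> S") (auto simp: aT bT bT' aout bout)
    qed
    have "(a \<circ> b) ^^ k = a ^^ k \<circ> b ^^ k" by (rule comp_funpow_commute[OF comm])
    also have "\<dots> = \<sigma>"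
    proof
      fix y show "(a ^^ k \<circ> b ^^ k) y = \<sigma> y"
        unfolding ak bk
        by (cases "y \<in> T"; cases "y \<in> S") (auto simp: perm_restrict_def \<sigma>out \<sigma>ST \<sigma>ST' \<sigma>T)
    qed
    finally have k: "(a \<circ> b) ^^ k = \<sigma>" .
    have perm: "a \<circ> b permutes S"
      by (rule permutes_compose[OF permutes_subset[OF bp] permutes_subset[OF ap]]) (use TS in auto)
    have "orbit a x = orbit (a \<circ> b) x"
      by (rule orbit_cong0[OF xT]) (auto simp: aT bout)
    then have orb: "orbit (a \<circ> b) x = T" using ao by simp
    have sg: "sg (a \<circ> b) = sg a * sg b"
      by (rule sg_comp[OF perm_of_permutes[OF ap fT] perm_of_permutes[OF bp fST]])
    have r1: "perm_restrict (a \<circ> b) T = a"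
      by (auto simp: perm_restrict_def fun_eq_iff bout aout)
    have r2: "perm_restrict (a \<circ> b) (S - T) = b"
      by (auto simp: perm_restrict_def fun_eq_iff bout aout bT bT')
    show ?thesis using k perm orb sg r1 r2 by (simp add: roots_def)
  qed
  have img: "{\<tau>\<in>roots k S \<sigma>. orbit \<tau> x = T} = ?h ` (?A \<times> ?B)"
  proof
    show "?h ` (?A \<times> ?B) \<subseteq> {\<tau>\<in>roots k S \<sigma>. orbit \<tau> x = T}" using prop1 by auto
  next
    show "{\<tau>\<in>roots k S \<sigma>. orbit \<tau> x = T} \<subseteq> ?h ` (?A \<times> ?B)"
    proof
      fix \<tau> assume "\<tau> \<in> {\<tau>\<in>roots k S \<sigma>. orbit \<tau> x = T}"
      then have \<tau>p: "\<tau> permutes S" and \<tau>k: "\<tau> ^^ k = \<sigma>" and \<tau>o: "orbit \<tau> x = T"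
        by (auto simp: roots_def)
      have invT: "inv_set \<tau> T" unfolding inv_set_def using \<tau>o orbit.step by fast
      have invST: "inv_set \<tau> (S - T)" by (rule inv_set_compl[OF \<tau>p fS TS invT])
      define a where "a = perm_restrict \<tau> T"
      define b where "b = perm_restrict \<tau> (S - T)"
      have ap: "a permutes T" unfolding a_def by (rule perm_restrict_permutes[OF \<tau>p fS TS invT])
      have bp: "b permutes (S - T)" unfolding b_def by (rule perm_restrict_permutes[OF \<tau>p fS _ invST]) auto
      have "orbit \<tau> x = orbit a x"
        by (rule orbit_cong0[OF xT]) (use invT in \<open>auto simp: inv_set_def a_def perm_restrict_def\<close>)
      then have ao: "orbit a x = T" using \<tau>o by simp
      have ak: "a ^^ k = perm_restrict \<sigma> T" unfolding a_def perm_restrict_funpow[OF invT] \<tau>k ..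
      have bk: "b ^^ k = perm_restrict \<sigma> (S - T)" unfolding b_def perm_restrict_funpow[OF invST] \<tau>k ..
      have "\<tau> = a \<circ> b"
      proof
        fix y show "\<tau> y = (a \<circ> b) y"
        proof (cases "y \<in> T")
          case True then show ?thesis by (simp add: a_def b_def perm_restrict_def)
        next
          case False
          show ?thesis
          proof (cases "y \<in> S")
            case True
            then have "\<tau> y \<in> S - T" using invST False by (auto simp: inv_set_def)
            then show ?thesis using False True by (simp add: a_def b_def perm_restrict_def)
          next
            case False': False
            then have "\<tau> y = y" using permutes_not_in[OF \<tau>p] by simp
            then show ?thesis using False False' by (simp add: a_def b_def perm_restrict_def)
          qed
        qed
      qed
      moreover have "a \<in> ?A" using ap ao ak by (simp add: XT_def)
      moreover have "b \<in> ?B" using bp bk by (simp add: roots_def)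
      ultimately show "\<tau> \<in> ?h ` (?A \<times> ?B)" by force
    qed
  qed
  have inj: "inj_on ?h (?A \<times> ?B)"
  proof (rule inj_onI)
    fix p q assume p: "p \<in> ?A \<times> ?B" and q: "q \<in> ?A \<times> ?B" and eq: "?h p = ?h q"
    obtain a b where "p = (a, b)" by fastforce
    obtain a' b' where "q = (a', b')" by fastforce
    show "p = q" using prop1[of a b] prop1[of a' b'] p q eq \<open>p = (a, b)\<close> \<open>q = (a', b')\<close>
      by (metis SigmaE old.prod.case prod.inject)
  qed
  have "(\<Sum>\<tau>\<in>{\<tau>\<in>roots k S \<sigma>. orbit \<tau> x = T}. sg \<tau>) = (\<Sum>p\<in>?A \<times> ?B. (sg \<circ> ?h) p)"
    unfolding img by (rule sum.reindex[OF inj])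
  also have "\<dots> = (\<Sum>(a, b)\<in>?A \<times> ?B. sg a * sg b)"
    by (rule sum.cong[OF refl]) (use prop1 in auto)
  also have "\<dots> = (\<Sum>a\<in>?A. sg a) * (\<Sum>b\<in>?B. sg b)"
    by (simp add: sum_product sum.cartesian_product)
  finally show ?thesis by (simp add: Rs_def)
qed

lemma nt1: "0 < m \<Longrightarrow> (m dvd k * n) \<longleftrightarrow> (m div gcd m k) dvd n" for m k n :: nat
proof -
  assume m: "0 < m"
  define d where "d = gcd m k"
  have d0: "d > 0" using m by (simp add: d_def)
  obtain m' where m': "m = d * m'" unfolding d_def by (metis gcd_dvd1 dvdE)
  obtain k' where k': "k = d * k'" unfolding d_def by (metis gcd_dvd2 dvdE)
  have cop: "coprime m' k'"
    using m' k' d0 unfolding d_def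
    by (metis gcd_mult_distrib_nat coprime_iff_gcd_eq_1 mult.right_neutral nat_mult_eq_cancel1)
  have "m div d = m'" using m' d0 by simp
  moreover have "(m dvd k * n) \<longleftrightarrow> m' dvd k' * n" using m' k' d0 by (simp add: mult.assoc)
  moreover have "m' dvd k' * n \<longleftrightarrow> m' dvd n" using cop by (simp add: coprime_dvd_mult_right_iff)
  ultimately show ?thesis by (simp add: d_def)
qed

lemma period_unique: "(\<And>n. P n \<longleftrightarrow> c dvd n) \<Longrightarrow> (\<And>n. P n \<longleftrightarrow> d dvd n) \<Longrightarrow> c = d" for c d :: nat
  by (metis dvd_antisym dvd_refl)

definition orbs :: "('a \<Rightarrow> 'a) \<Rightarrow> 'a set \<Rightarrow> 'a set set" where
  "orbs \<sigma> S = orbit \<sigma> ` S"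

lemma XT_structure:
  assumes fS: "finite S" and \<sigma>: "\<sigma> permutes S" and TS: "T \<subseteq> S" and xT: "x \<in> T"
    and \<tau>: "\<tau> \<in> XT k T \<sigma> x"
  defines "l \<equiv> card (orbit \<sigma> x)"
  shows "\<exists>\<C>. \<C> \<subseteq> {C \<in> orbs \<sigma> S. card C = l} \<and> orbit \<sigma> x \<in> \<C> \<and> card \<C> \<in> Gk k l
            \<and> T = \<Union>\<C> \<and> card T = l * card \<C>"
    and "sg \<tau> = (-1) ^ (card T + 1)"
proof -
  have \<tau>p: "\<tau> permutes T" and \<tau>o: "orbit \<tau> x = T" and \<tau>k: "\<tau> ^^ k = perm_restrict \<sigma> T"
    using \<tau> by (auto simp: XT_def)
  have fT: "finite T" using fS TS finite_subset by blast
  show "sg \<tau> = (-1) ^ (card T + 1)" by (rule sg_single_cycle[OF \<tau>p fT \<tau>o])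
  define m where "m = card T"
  have m0: "m > 0" using xT fT by (auto simp: m_def card_gt_0_iff)
  have \<tau>perm: "permutation \<tau>" using perm_of_permutes[OF \<tau>p fT] .
  have \<sigma>perm: "permutation \<sigma>" using perm_of_permutes[OF \<sigma> fS] .
  have \<tau>kp: "(\<tau> ^^ k) permutes T" by (rule permutes_funpow[OF \<tau>p])
  have \<tau>kperm: "permutation (\<tau> ^^ k)" using perm_of_permutes[OF \<tau>kp fT] .
  have \<sigma>T: "y \<in> T \<Longrightarrow> \<sigma> y \<in> T" for y
    using permutes_in_image[OF \<tau>kp] \<tau>k by (metis perm_restrict_simps(1))
  have orbT: "y \<in> T \<Longrightarrow> card (orbit \<tau> y) = m" for y
    using orbit_eq_of_mem[OF \<tau>perm, of y x] \<tau>o m_def by simp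
  have orb_eq: "y \<in> T \<Longrightarrow> orbit \<sigma> y = orbit (\<tau> ^^ k) y" for y
    by (rule orbit_cong0) (use \<sigma>T \<tau>k in \<open>auto simp: perm_restrict_def\<close>)
  have card_orb: "y \<in> T \<Longrightarrow> card (orbit \<sigma> y) = m div gcd m k" for y
  proof -
    assume y: "y \<in> T"
    have "((\<tau> ^^ k) ^^ n) y = y \<longleftrightarrow> card (orbit (\<tau> ^^ k) y) dvd n" for n
      by (rule orbit_period[OF \<tau>kperm])
    moreover have "((\<tau> ^^ k) ^^ n) y = y \<longleftrightarrow> (m div gcd m k) dvd n" for n
      using orbit_period[OF \<tau>perm, of "k * n" y] orbT[OF y] nt1[OF m0, of k n]
      by (simp add: funpow_mult)
    ultimately have "card (orbit (\<tau> ^^ k) y) = m div gcd m k" by (rule period_unique)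
    then show ?thesis using orb_eq[OF y] by simp
  qed
  define g where "g = gcd m k"
  have lx: "l = m div g" using card_orb[OF xT] by (simp add: l_def g_def)
  have mlg: "m = l * g" using lx by (simp add: g_def)
  have l0: "l > 0" using mlg m0 by simp
  define \<C> where "\<C> = orbit \<sigma> ` T"
  have orb_sub: "y \<in> T \<Longrightarrow> orbit \<sigma> y \<subseteq> T" for y
    using orb_eq permutes_orbit_subset[OF \<tau>kp] by metis
  have UC: "T = \<Union>\<C>"
  proof
    show "T \<subseteq> \<Union>\<C>"
    proof
      fix y assume "y \<in> T"
      moreover have "y \<in> orbit \<sigma> y" by (rule self_in_orbit'[OF \<sigma>perm])
      ultimately show "y \<in> \<Union>\<C>" unfolding \<C>_def by blast
    qed
    show "\<Union>\<C> \<subseteq> T" unfolding \<C>_def using orb_sub by auto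
  qed
  have Csub: "\<C> \<subseteq> {C \<in> orbs \<sigma> S. card C = l}"
    unfolding \<C>_def orbs_def using TS card_orb lx g_def by auto
  have xC: "orbit \<sigma> x \<in> \<C>" using xT by (simp add: \<C>_def)
  have fC: "finite \<C>" using fT by (simp add: \<C>_def)
  have "card T = (\<Sum>C\<in>\<C>. card C)"
    unfolding UC
  proof (rule card_Union_disjoint)
    show "pairwise disjnt \<C>" unfolding \<C>_def pairwise_def disjnt_def
      using orbits_disj[OF \<sigma>perm] by blast
    show "\<And>A. A \<in> \<C> \<Longrightarrow> finite A" using orb_sub fT \<C>_def finite_subset by blast
  qed
  also have "\<dots> = card \<C> * l" using Csub by (simp add: subset_iff)
  finally have cT: "card T = l * card \<C>" by simp
  then have cC: "card \<C> = g" using mlg l0 m_def by simp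
  have "card \<C> * l = m" using cC mlg by simp
  then have "gcd (card \<C> * l) k = card \<C>" using cC unfolding g_def by simp
  then have "card \<C> \<in> Gk k l" by (simp add: Gk_def)
  then show "\<exists>\<C>. \<C> \<subseteq> {C \<in> orbs \<sigma> S. card C = l} \<and> orbit \<sigma> x \<in> \<C> \<and> card \<C> \<in> Gk k l
            \<and> T = \<Union>\<C> \<and> card T = l * card \<C>"
    using Csub xC UC cT by blast
qed

lemma nt2: "(c * a) mod l = 1 mod l \<Longrightarrow> (a * u) mod l = (a * v) mod l \<Longrightarrow> u mod l = v mod l"
  for a c l u v :: nat
proof -
  assume ca: "(c * a) mod l = 1 mod l" and e: "(a * u) mod l = (a * v) mod l"
  have "u mod l = ((c * a) * u) mod l" using ca by (metis mod_mult_left_eq mult_1)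
  also have "\<dots> = (c * (a * u)) mod l" by (simp add: mult.assoc)
  also have "\<dots> = (c * ((a * u) mod l)) mod l" by (simp add: mod_mult_right_eq)
  also have "\<dots> = (c * ((a * v) mod l)) mod l" using e by simp
  also have "\<dots> = ((c * a) * v) mod l" by (simp add: mod_mult_right_eq mult.assoc)
  also have "\<dots> = v mod l" using ca by (metis mod_mult_left_eq mult_1)
  finally show ?thesis .
qed

lemma nt3: "i < g \<Longrightarrow> (g * t + i) mod (g * l) = g * (t mod l) + i" for g t i l :: nat
  by (simp add: mod_mult2_eq)

locale cyc =
  fixes k :: nat and S :: "'a set" and \<sigma> :: "'a \<Rightarrow> 'a" and x :: 'a and l :: nat
    and \<C> :: "'a set set" and T :: "'a set" and g :: nat
  assumes k: "k > 0" and fS: "finite S" and \<sigma>: "\<sigma> permutes S"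
    and Csub: "\<C> \<subseteq> {C \<in> orbs \<sigma> S. card C = l}" and xC: "orbit \<sigma> x \<in> \<C>"
    and gdef: "g = card \<C>" and gG: "g \<in> Gk k l" and Tdef: "T = \<Union>\<C>"
begin

lemma \<sigma>perm: "permutation \<sigma>" using perm_of_permutes[OF \<sigma> fS] .

lemma fC: "finite \<C>"
proof (rule finite_subset)
  show "\<C> \<subseteq> orbs \<sigma> S" using Csub by auto
  show "finite (orbs \<sigma> S)" unfolding orbs_def using fS by simp
qed

lemma xT: "x \<in> T" using xC self_in_orbit'[OF \<sigma>perm, of x] Tdef by blast

lemma inC: "C \<in> \<C> \<Longrightarrow> \<exists>z\<in>S. C = orbit \<sigma> z \<and> card C = l"
  using Csub by (auto simp: orbs_def)

lemma TS: "T \<subseteq> S"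
proof
  fix y assume "y \<in> T"
  then obtain C where C: "C \<in> \<C>" "y \<in> C" using Tdef by blast
  then obtain z where "z \<in> S" "C = orbit \<sigma> z" using inC by blast
  then have "C \<subseteq> S" using permutes_orbit_subset[OF \<sigma>] by simp
  then show "y \<in> S" using C by blast
qed

lemma fT: "finite T" using TS fS finite_subset by blast

lemma orbT: "y \<in> T \<Longrightarrow> orbit \<sigma> y \<in> \<C> \<and> card (orbit \<sigma> y) = l"
proof -
  assume "y \<in> T"
  then obtain C where C: "C \<in> \<C>" "y \<in> C" using Tdef by blast
  then obtain z where z: "C = orbit \<sigma> z" "card C = l" using Csub by (auto simp: orbs_def)
  have "orbit \<sigma> y = C" using orbit_eq_of_mem[OF \<sigma>perm] C z by blast
  then show ?thesis using C z by simp
qed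

lemma lx: "card (orbit \<sigma> x) = l" using orbT xT by blast

lemma l0: "l > 0" using lx orbit_card_pos[OF \<sigma>perm] by metis

lemma g0: "g > 0" using xC fC gdef card_gt_0_iff by blast

lemma \<sigma>powT: "y \<in> T \<Longrightarrow> (\<sigma> ^^ n) y \<in> T"
  using funpow_in_orbit'[OF \<sigma>perm] orbT Tdef by blast

lemma cardT: "card T = l * g"
proof -
  have "card T = (\<Sum>C\<in>\<C>. card C)"
    unfolding Tdef
  proof (rule card_Union_disjoint)
    show "pairwise disjnt \<C>" unfolding pairwise_def disjnt_def
    proof (intro ballI impI)
      fix C D assume C: "C \<in> \<C>" and D: "D \<in> \<C>" and ne: "C \<noteq> D"
      obtain z1 where "C = orbit \<sigma> z1" using inC[OF C] by blast
      moreover obtain z2 where "D = orbit \<sigma> z2" using inC[OF D] by blast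
      ultimately show "C \<inter> D = {}" using ne orbits_disj[OF \<sigma>perm] by blast
    qed
    fix A assume "A \<in> \<C>"
    then have "A \<subseteq> T" using Tdef by blast
    then show "finite A" by (rule finite_subset[OF _ fT])
  qed
  also have "\<dots> = card \<C> * l" using Csub by (simp add: subset_iff)
  finally show ?thesis by (simp add: gdef)
qed

definition kk where "kk = k div g"

lemma kk: "k = g * kk" using gG k Gk_props unfolding kk_def by (metis dvd_mult_div_cancel)

lemma kk0: "kk > 0" using kk k by (metis gr0I mult_0_right)

lemma cop: "coprime l kk"
proof -
  have "gcd (g * l) k = g" using gG by (simp add: Gk_def)
  then have "g * gcd l kk = g" using kk by (simp add: gcd_mult_distrib_nat)
  then show ?thesis using g0 by (simp add: coprime_iff_gcd_eq_1)
qed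

definition alpha where "alpha = (SOME a. (kk * a) mod l = 1 mod l)"

lemma alpha: "(kk * alpha) mod l = 1 mod l"
proof -
  obtain a b where "kk * a = l * b + gcd kk l" using bezout_nat kk0 by blast
  then have "kk * a = l * b + 1" using cop by (simp add: coprime_iff_gcd_eq_1 gcd.commute)
  then have "(kk * a) mod l = 1 mod l" by (simp only: mod_mult_self4)
  then show ?thesis unfolding alpha_def by (rule someI)
qed

lemma \<sigma>mod: "y \<in> T \<Longrightarrow> (\<sigma> ^^ a) y = (\<sigma> ^^ b) y \<longleftrightarrow> a mod l = b mod l"
  using funpow_mod_eq[OF \<sigma>perm] orbT by metis

lemma XT_facts:
  assumes \<tau>: "\<tau> \<in> XT k T \<sigma> x"
  shows "permutation \<tau>" and "\<And>a b. (\<tau> ^^ a) x = (\<tau> ^^ b) x \<longleftrightarrow> a mod (l * g) = b mod (l * g)"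
    and "\<And>n. (\<tau> ^^ n) x \<in> T" and "\<And>y s. y \<in> T \<Longrightarrow> (\<sigma> ^^ s) y = (\<tau> ^^ (k * s)) y"
    and "\<And>y. y \<in> T \<Longrightarrow> (\<tau> ^^ g) y = (\<sigma> ^^ alpha) y"
    and "\<And>y. y \<notin> T \<Longrightarrow> \<tau> y = y"
    and "T = range (\<lambda>n. (\<tau> ^^ n) x)"
proof -
  have \<tau>p: "\<tau> permutes T" and \<tau>o: "orbit \<tau> x = T" and \<tau>k: "\<tau> ^^ k = perm_restrict \<sigma> T"
    using \<tau> by (auto simp: XT_def)
  show \<tau>perm: "permutation \<tau>" using perm_of_permutes[OF \<tau>p fT] .
  show modx: "\<And>a b. (\<tau> ^^ a) x = (\<tau> ^^ b) x \<longleftrightarrow> a mod (l * g) = b mod (l * g)"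
    using funpow_mod_eq[OF \<tau>perm] \<tau>o cardT by metis
  show "\<And>n. (\<tau> ^^ n) x \<in> T" using funpow_in_orbit'[OF \<tau>perm] \<tau>o by blast
  show "\<And>y. y \<notin> T \<Longrightarrow> \<tau> y = y" using permutes_not_in[OF \<tau>p] by simp
  show "T = range (\<lambda>n. (\<tau> ^^ n) x)" using orbit_eq_range[OF \<tau>perm] \<tau>o by simp
  have invT: "inv_set \<sigma> T" unfolding inv_set_def using \<sigma>powT[of _ 1] by simp
  show pw: "\<And>y s. y \<in> T \<Longrightarrow> (\<sigma> ^^ s) y = (\<tau> ^^ (k * s)) y"
  proof -
    fix y s assume y: "y \<in> T"
    have "(\<tau> ^^ (k * s)) y = ((perm_restrict \<sigma> T) ^^ s) y" by (simp add: funpow_mult[symmetric] \<tau>k)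
    also have "\<dots> = (\<sigma> ^^ s) y" using y by (simp add: perm_restrict_funpow[OF invT] perm_restrict_def)
    finally show "(\<sigma> ^^ s) y = (\<tau> ^^ (k * s)) y" by simp
  qed
  show "\<And>y. y \<in> T \<Longrightarrow> (\<tau> ^^ g) y = (\<sigma> ^^ alpha) y"
  proof -
    fix y assume y: "y \<in> T"
    have cy: "card (orbit \<tau> y) = l * g" using orbit_eq_of_mem[OF \<tau>perm, of y x] \<tau>o y cardT by simp
    have e1: "k * alpha = g * (kk * alpha)" using kk by simp
    have e2: "l * g = g * l" by simp
    have "(k * alpha) mod (l * g) = (g * (kk * alpha)) mod (g * l)" by (simp only: e1 e2)
    also have "\<dots> = g * ((kk * alpha) mod l)" by (rule mult_mod_right[symmetric])
    also have "\<dots> = g * (1 mod l)" using alpha by simp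
    also have "\<dots> = (g * 1) mod (g * l)" by (rule mult_mod_right)
    also have "\<dots> = g mod (l * g)" by (simp only: e2 mult_1_right)
    finally have "(\<tau> ^^ (k * alpha)) y = (\<tau> ^^ g) y"
      using funpow_mod_eq[OF \<tau>perm, of "k * alpha" y g] cy by simp
    then show "(\<tau> ^^ g) y = (\<sigma> ^^ alpha) y" using pw[OF y] by simp
  qed
qed

end

context cyc
begin

definition Phi :: "('a \<Rightarrow> 'a) \<Rightarrow> 'a list" where
  "Phi \<tau> = map (\<lambda>i. (\<tau> ^^ i) x) [1..<g]"

definition W :: "'a list set" where
  "W = {ys. length ys = g - 1 \<and> set ys \<subseteq> T \<and> distinct (map (orbit \<sigma>) (x # ys))}"

lemma x_Phi: "x # Phi \<tau> = map (\<lambda>i. (\<tau> ^^ i) x) [0..<g]"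
  using g0 by (simp add: Phi_def upt_conv_Cons)

lemma Phi_W: assumes \<tau>: "\<tau> \<in> XT k T \<sigma> x" shows "Phi \<tau> \<in> W"
proof -
  note F = XT_facts[OF \<tau>]
  have "set (Phi \<tau>) \<subseteq> T" using F(3) by (auto simp: Phi_def)
  moreover have "inj_on (\<lambda>i. orbit \<sigma> ((\<tau> ^^ i) x)) {0..<g}"
  proof (rule inj_onI)
    fix i j assume i: "i \<in> {0..<g}" and j: "j \<in> {0..<g}"
      and eq: "orbit \<sigma> ((\<tau> ^^ i) x) = orbit \<sigma> ((\<tau> ^^ j) x)"
    have "(\<tau> ^^ j) x \<in> orbit \<sigma> ((\<tau> ^^ i) x)" using eq self_in_orbit'[OF \<sigma>perm] by metis
    then obtain s where s: "(\<tau> ^^ j) x = (\<sigma> ^^ s) ((\<tau> ^^ i) x)"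
      using orbit_eq_range[OF \<sigma>perm] by blast
    also have "\<dots> = (\<tau> ^^ (k * s)) ((\<tau> ^^ i) x)" using F(4)[OF F(3)] by simp
    also have "\<dots> = (\<tau> ^^ (k * s + i)) x" by (simp add: funpow_add)
    finally have "j mod (l * g) = (k * s + i) mod (l * g)" using F(2) by simp
    then have "j mod (l * g) mod g = (k * s + i) mod (l * g) mod g" by simp
    then have "j mod g = (k * s + i) mod g" by (simp add: mod_mod_cancel)
    also have "\<dots> = i mod g"
    proof -
      have e: "k * s + i = i + g * (kk * s)" using kk by (simp add: mult.assoc)
      show ?thesis by (simp only: e mod_mult_self2)
    qed
    finally show "i = j" using i j by simp
  qed
  then have "distinct (map (orbit \<sigma>) (x # Phi \<tau>))"
    unfolding x_Phi by (simp add: distinct_map comp_def)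
  moreover have "length (Phi \<tau>) = g - 1" by (simp add: Phi_def)
  ultimately show ?thesis unfolding W_def by blast
qed

lemma key_pow: assumes \<tau>: "\<tau> \<in> XT k T \<sigma> x"
  shows "(\<tau> ^^ (g * j + i)) x = (\<sigma> ^^ (alpha * j)) ((\<tau> ^^ i) x)"
proof (induction j)
  case 0 then show ?case by simp
next
  case (Suc j)
  note F = XT_facts[OF \<tau>]
  have e: "g * Suc j + i = g + (g * j + i)" by simp
  have "(\<tau> ^^ (g * Suc j + i)) x = (\<tau> ^^ g) ((\<tau> ^^ (g * j + i)) x)"
    unfolding e by (simp only: funpow_add o_apply)
  also have "\<dots> = (\<sigma> ^^ alpha) ((\<tau> ^^ (g * j + i)) x)" using F(5)[OF F(3)] by simp
  also have "\<dots> = (\<sigma> ^^ alpha) ((\<sigma> ^^ (alpha * j)) ((\<tau> ^^ i) x))" using Suc by simp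
  also have "\<dots> = (\<sigma> ^^ (alpha * Suc j)) ((\<tau> ^^ i) x)"
  proof -
    have e2: "alpha * Suc j = alpha + alpha * j" by simp
    show ?thesis unfolding e2 by (simp only: funpow_add o_apply)
  qed
  finally show ?case .
qed

lemma Phi_inj: "inj_on Phi (XT k T \<sigma> x)"
proof (rule inj_onI)
  fix \<tau>1 \<tau>2 assume t1: "\<tau>1 \<in> XT k T \<sigma> x" and t2: "\<tau>2 \<in> XT k T \<sigma> x" and eq: "Phi \<tau>1 = Phi \<tau>2"
  note F1 = XT_facts[OF t1] and F2 = XT_facts[OF t2]
  have small: "(\<tau>1 ^^ i) x = (\<tau>2 ^^ i) x" if "i < g" for i
  proof -
    have "map (\<lambda>i. (\<tau>1 ^^ i) x) [0..<g] = map (\<lambda>i. (\<tau>2 ^^ i) x) [0..<g]"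
      using eq x_Phi by metis
    then show ?thesis using that by (metis (no_types, lifting) add_0 diff_zero length_upt nth_map nth_upt)
  qed
  have all: "(\<tau>1 ^^ p) x = (\<tau>2 ^^ p) x" for p
  proof -
    have p: "p = g * (p div g) + p mod g" by simp
    have "p mod g < g" using g0 by simp
    then show ?thesis using key_pow[OF t1, of "p div g" "p mod g"] key_pow[OF t2, of "p div g" "p mod g"] small p
      by metis
  qed
  show "\<tau>1 = \<tau>2"
  proof
    fix y show "\<tau>1 y = \<tau>2 y"
    proof (cases "y \<in> T")
      case True
      then obtain p where "y = (\<tau>1 ^^ p) x" using F1(7) by blast
      then show ?thesis using all[of "Suc p"] all[of p] by simp
    next
      case False then show ?thesis using F1(6) F2(6) by simp
    qed
  qed
qed

end

context cyc
begin

definition Lst :: "'a list \<Rightarrow> 'a list" where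
  "Lst ys = map (\<lambda>p. (\<sigma> ^^ (alpha * (p div g))) ((x # ys) ! (p mod g))) [0..<l * g]"

definition Psi :: "'a list \<Rightarrow> ('a \<Rightarrow> 'a)" where
  "Psi ys = cycle_of_list (Lst ys)"

lemma lg0: "l * g > 0" using l0 g0 by simp

lemma W_facts:
  assumes ys: "ys \<in> W"
  shows "length (x # ys) = g" and "\<And>i. i < g \<Longrightarrow> (x # ys) ! i \<in> T"
    and "\<And>i j. i < g \<Longrightarrow> j < g \<Longrightarrow> orbit \<sigma> ((x # ys) ! i) = orbit \<sigma> ((x # ys) ! j) \<Longrightarrow> i = j"
proof -
  have len: "length ys = g - 1" and sub: "set ys \<subseteq> T" and d: "distinct (map (orbit \<sigma>) (x # ys))"
    using ys by (auto simp: W_def)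
  show lg: "length (x # ys) = g" using len g0 by simp
  show "\<And>i. i < g \<Longrightarrow> (x # ys) ! i \<in> T"
  proof -
    fix i assume "i < g"
    then have "(x # ys) ! i \<in> set (x # ys)" using lg by (metis nth_mem)
    then show "(x # ys) ! i \<in> T" using sub xT by auto
  qed
  show "\<And>i j. i < g \<Longrightarrow> j < g \<Longrightarrow> orbit \<sigma> ((x # ys) ! i) = orbit \<sigma> ((x # ys) ! j) \<Longrightarrow> i = j"
    using nth_eq_iff_index_eq[OF d] lg by (metis length_map nth_map)
qed

lemma Lst_len: "length (Lst ys) = l * g" by (simp add: Lst_def)

lemma Lst_nth: "p < l * g \<Longrightarrow> Lst ys ! p = (\<sigma> ^^ (alpha * (p div g))) ((x # ys) ! (p mod g))"
  by (simp add: Lst_def)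

lemma Lst_div: "p < l * g \<Longrightarrow> p div g < l"
  by (simp add: less_mult_imp_div_less)

lemma Lst_in:
  assumes ys: "ys \<in> W" and p: "p < l * g"
  shows "Lst ys ! p \<in> T" and "orbit \<sigma> (Lst ys ! p) = orbit \<sigma> ((x # ys) ! (p mod g))"
proof -
  have z: "(x # ys) ! (p mod g) \<in> T" using W_facts(2)[OF ys] g0 by simp
  show "Lst ys ! p \<in> T" using Lst_nth[OF p] \<sigma>powT[OF z] by simp
  show "orbit \<sigma> (Lst ys ! p) = orbit \<sigma> ((x # ys) ! (p mod g))"
    using Lst_nth[OF p] orbit_eq_of_mem[OF \<sigma>perm] funpow_in_orbit'[OF \<sigma>perm] by metis
qed

lemma Lst_distinct: assumes ys: "ys \<in> W" shows "distinct (Lst ys)"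
  unfolding distinct_conv_nth Lst_len
proof (intro allI impI)
  fix p q assume p: "p < l * g" and q: "q < l * g" and ne: "p \<noteq> q"
  show "Lst ys ! p \<noteq> Lst ys ! q"
  proof
    assume eq: "Lst ys ! p = Lst ys ! q"
    have "orbit \<sigma> ((x # ys) ! (p mod g)) = orbit \<sigma> ((x # ys) ! (q mod g))"
      using Lst_in(2)[OF ys p] Lst_in(2)[OF ys q] eq by simp
    then have im: "p mod g = q mod g" using W_facts(3)[OF ys] g0 by simp
    define z where "z = (x # ys) ! (p mod g)"
    have zT: "z \<in> T" using W_facts(2)[OF ys] g0 by (simp add: z_def)
    have "(\<sigma> ^^ (alpha * (p div g))) z = (\<sigma> ^^ (alpha * (q div g))) z"
      using eq Lst_nth[OF p] Lst_nth[OF q] im by (simp add: z_def)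
    then have "(alpha * (p div g)) mod l = (alpha * (q div g)) mod l" using \<sigma>mod[OF zT] by simp
    then have "(p div g) mod l = (q div g) mod l" using nt2[OF alpha] by blast
    then have "p div g = q div g" using Lst_div[OF p] Lst_div[OF q] by simp
    then have "p = q" using im by (metis div_mult_mod_eq)
    then show False using ne by simp
  qed
qed

lemma Lst_set: assumes ys: "ys \<in> W" shows "set (Lst ys) = T"
proof (rule card_subset_eq[OF fT])
  show "set (Lst ys) \<subseteq> T" using Lst_in(1)[OF ys] by (auto simp: in_set_conv_nth Lst_len)
  show "card (set (Lst ys)) = card T"
    using distinct_card[OF Lst_distinct[OF ys]] Lst_len cardT by simp
qed

lemma Lst_0: "Lst ys ! 0 = x" using lg0 by (simp add: Lst_nth)

lemma Psi_rot: assumes ys: "ys \<in> W" and p: "p < l * g"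
  shows "((Psi ys) ^^ n) (Lst ys ! p) = Lst ys ! ((n + p) mod (l * g))"
proof -
  have "map ((Psi ys) ^^ n) (Lst ys) = rotate n (Lst ys)"
    unfolding Psi_def by (rule cyclic_rotation[OF Lst_distinct[OF ys]])
  then have "map ((Psi ys) ^^ n) (Lst ys) ! p = rotate n (Lst ys) ! p" by simp
  then show ?thesis using p Lst_len by (simp add: nth_rotate)
qed

lemma Psi_XT: assumes ys: "ys \<in> W" shows "Psi ys \<in> XT k T \<sigma> x"
proof -
  have perm: "Psi ys permutes T" unfolding Psi_def using cycle_permutes Lst_set[OF ys] by metis
  have pp: "permutation (Psi ys)" unfolding Psi_def by (rule permutation_of_cycle)
  have orb: "orbit (Psi ys) x = T"
  proof -
    have "orbit (Psi ys) x = range (\<lambda>n. ((Psi ys) ^^ n) x)" by (rule orbit_eq_range[OF pp])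
    also have "\<dots> = range (\<lambda>n. Lst ys ! (n mod (l * g)))"
      using Psi_rot[OF ys lg0] Lst_0 by simp
    also have "\<dots> = set (Lst ys)"
    proof
      show "range (\<lambda>n. Lst ys ! (n mod (l * g))) \<subseteq> set (Lst ys)"
        using lg0 Lst_len by auto
      show "set (Lst ys) \<subseteq> range (\<lambda>n. Lst ys ! (n mod (l * g)))"
      proof
        fix y assume "y \<in> set (Lst ys)"
        then obtain p where "p < l * g" "y = Lst ys ! p" using Lst_len by (metis in_set_conv_nth)
        then show "y \<in> range (\<lambda>n. Lst ys ! (n mod (l * g)))" by (metis mod_less rangeI)
      qed
    qed
    finally show ?thesis using Lst_set[OF ys] by simp
  qed
  have pk: "(Psi ys) ^^ k = perm_restrict \<sigma> T"
  proof
    fix y show "((Psi ys) ^^ k) y = perm_restrict \<sigma> T y"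
    proof (cases "y \<in> T")
      case False
      then show ?thesis using permutes_not_in[OF permutes_funpow[OF perm, of k]]
        by (simp add: perm_restrict_def)
    next
      case True
      then obtain p where p: "p < l * g" and y: "y = Lst ys ! p"
        using Lst_set[OF ys] Lst_len by (metis in_set_conv_nth)
      define i where "i = p mod g"
      define j where "j = p div g"
      define z where "z = (x # ys) ! i"
      have zT: "z \<in> T" using W_facts(2)[OF ys] g0 by (simp add: z_def i_def)
      have ig: "i < g" using g0 by (simp add: i_def)
      have pe: "k + p = g * (j + kk) + i" using kk by (simp add: i_def j_def algebra_simps)
      define q where "q = g * ((j + kk) mod l) + i"
      have qe: "(k + p) mod (l * g) = q"
        unfolding pe q_def using nt3[OF ig, of "j + kk" l] by (simp add: mult.commute)
      have ql: "q < l * g" using qe lg0 by (metis mod_less_divisor)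
      have qdiv: "q div g = (j + kk) mod l" and qmod: "q mod g = i"
        using ig g0 by (simp_all add: q_def)
      have "((Psi ys) ^^ k) y = Lst ys ! q" using Psi_rot[OF ys p, of k] y qe by simp
      also have "\<dots> = (\<sigma> ^^ (alpha * ((j + kk) mod l))) z"
        using Lst_nth[OF ql] qdiv qmod by (simp add: z_def)
      also have "\<dots> = (\<sigma> ^^ (Suc (alpha * j))) z"
      proof -
        have "(alpha * ((j + kk) mod l)) mod l = (alpha * (j + kk)) mod l"
          by (simp add: mod_mult_right_eq)
        also have "\<dots> = (alpha * j + (kk * alpha) mod l) mod l"
          by (simp add: algebra_simps mod_add_right_eq)
        also have "\<dots> = (Suc (alpha * j)) mod l" using alpha by (simp add: mod_add_right_eq)
        finally show ?thesis by (simp only: \<sigma>mod[OF zT])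
      qed
      also have "\<dots> = \<sigma> (Lst ys ! p)" using Lst_nth[OF p] by (simp add: z_def i_def j_def)
      finally show ?thesis using True y by (simp add: perm_restrict_def)
    qed
  qed
  show ?thesis using perm orb pk by (simp add: XT_def)
qed

lemma Phi_Psi: assumes ys: "ys \<in> W" shows "Phi (Psi ys) = ys"
proof (rule nth_equalityI)
  have len: "length ys = g - 1" using ys by (simp add: W_def)
  show "length (Phi (Psi ys)) = length ys" using len by (simp add: Phi_def)
  fix t assume "t < length (Phi (Psi ys))"
  then have t: "t < g - 1" by (simp add: Phi_def)
  have tg: "Suc t < g" using t by simp
  have "g \<le> l * g" using l0 by simp
  then have tl: "Suc t < l * g" using tg by linarith
  have "Phi (Psi ys) ! t = ((Psi ys) ^^ (Suc t)) x" using t by (simp add: Phi_def)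
  also have "\<dots> = Lst ys ! (Suc t)"
    using Psi_rot[OF ys lg0, of "Suc t"] Lst_0 tl by simp
  also have "\<dots> = (x # ys) ! (Suc t)" using Lst_nth[OF tl] t by simp
  finally show "Phi (Psi ys) ! t = ys ! t" by simp
qed

lemma card_XT: "card (XT k T \<sigma> x) = card W"
proof -
  have "Phi ` XT k T \<sigma> x = W"
  proof
    show "Phi ` XT k T \<sigma> x \<subseteq> W" using Phi_W by auto
    show "W \<subseteq> Phi ` XT k T \<sigma> x"
    proof
      fix ys assume ys: "ys \<in> W"
      then have "ys = Phi (Psi ys)" by (simp add: Phi_Psi)
      then show "ys \<in> Phi ` XT k T \<sigma> x" using Psi_XT[OF ys] by blast
    qed
  qed
  then show ?thesis using card_image[OF Phi_inj] by simp
qed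

end

lemma count_lists:
  fixes \<D> :: "'a set set" and f :: "'a \<Rightarrow> 'a set" and U :: "'a set"
  assumes fD: "finite \<D>" and cD: "\<And>D. D \<in> \<D> \<Longrightarrow> card D = l" and l0: "l > 0"
    and disj: "pairwise disjnt \<D>" and U: "U = \<Union>\<D>"
    and f: "\<And>y. y \<in> U \<Longrightarrow> f y \<in> \<D> \<and> y \<in> f y"
  shows "card {ys. length ys = r \<and> set ys \<subseteq> U \<and> distinct (map f ys)} = (\<Prod>i<r. (card \<D> - i)) * l ^ r"
proof (induction r)
  case 0
  have "{ys. length ys = 0 \<and> set ys \<subseteq> U \<and> distinct (map f ys)} = {[]}" by auto
  then show ?case by simp
next
  case (Suc r)
  define L where "L r = {ys. length ys = r \<and> set ys \<subseteq> U \<and> distinct (map f ys)}" for r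
  define B where "B ys = {y \<in> U. f y \<notin> f ` set ys}" for ys
  have finD: "D \<in> \<D> \<Longrightarrow> finite D" for D using cD l0 card_ge_0_finite by metis
  have fU: "finite U" using fD finD U by blast
  have fL: "finite (L r)" for r
    by (rule finite_subset[OF _ finite_lists_length_eq[OF fU, of r]]) (auto simp: L_def)
  have cardU: "card U = card \<D> * l"
  proof -
    have "card U = (\<Sum>D\<in>\<D>. card D)" unfolding U by (rule card_Union_disjoint[OF disj]) (use finD in auto)
    then show ?thesis using cD by simp
  qed
  have same: "y \<in> U \<Longrightarrow> z \<in> U \<Longrightarrow> y \<in> f z \<Longrightarrow> f y = f z" for y z
    using f disj unfolding pairwise_def disjnt_def by blast
  have cardB: "card (B ys) = (card \<D> - r) * l" if ys: "ys \<in> L r" for ys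
  proof -
    have len: "length ys = r" and sub: "set ys \<subseteq> U" and d: "distinct (map f ys)" using ys by (auto simp: L_def)
    define A where "A = \<Union>(f ` set ys)"
    have BA: "B ys = U - A"
    proof
      show "B ys \<subseteq> U - A"
      proof
        fix y assume y: "y \<in> B ys"
        then have yU: "y \<in> U" and nf: "f y \<notin> f ` set ys" by (auto simp: B_def)
        have "y \<notin> A"
        proof
          assume "y \<in> A"
          then obtain z where "z \<in> set ys" "y \<in> f z" by (auto simp: A_def)
          then have "f y = f z" using same yU sub by blast
          then show False using nf \<open>z \<in> set ys\<close> by blast
        qed
        then show "y \<in> U - A" using yU by blast
      qed
      show "U - A \<subseteq> B ys"
      proof
        fix y assume y: "y \<in> U - A"
        have "f y \<notin> f ` set ys"
        proof
          assume "f y \<in> f ` set ys"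
          then have "y \<in> A" using f y by (auto simp: A_def)
          then show False using y by blast
        qed
        then show "y \<in> B ys" using y by (simp add: B_def)
      qed
    qed
    have AU: "A \<subseteq> U" unfolding A_def using f sub U by blast
    have cfs: "card (f ` set ys) = r" using distinct_card[OF d] len by simp
    have fsD: "f ` set ys \<subseteq> \<D>" using f sub by blast
    have "card A = (\<Sum>D\<in>f ` set ys. card D)" unfolding A_def
      by (rule card_Union_disjoint) (use disj fsD finD in \<open>auto simp: pairwise_def\<close>)
    also have "\<dots> = r * l" using cfs fsD cD by (simp add: subset_iff)
    finally have cA: "card A = r * l" .
    have "card (B ys) = card U - card A" unfolding BA by (rule card_Diff_subset[OF finite_subset[OF AU fU] AU])
    also have "\<dots> = (card \<D> - r) * l" using cardU cA by (simp add: diff_mult_distrib)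
    finally show ?thesis .
  qed
  have img: "L (Suc r) = (\<lambda>(ys, y). y # ys) ` (SIGMA ys:L r. B ys)"
  proof
    show "L (Suc r) \<subseteq> (\<lambda>(ys, y). y # ys) ` (SIGMA ys:L r. B ys)"
    proof
      fix zs assume zs: "zs \<in> L (Suc r)"
      then obtain y ys where zs': "zs = y # ys" by (cases zs) (auto simp: L_def)
      then have "ys \<in> L r" "y \<in> B ys" using zs by (auto simp: L_def B_def)
      then show "zs \<in> (\<lambda>(ys, y). y # ys) ` (SIGMA ys:L r. B ys)" using zs' by force
    qed
    show "(\<lambda>(ys, y). y # ys) ` (SIGMA ys:L r. B ys) \<subseteq> L (Suc r)"
      by (auto simp: L_def B_def)
  qed
  have inj: "inj_on (\<lambda>(ys, y). y # ys) (SIGMA ys:L r. B ys)" by (auto simp: inj_on_def)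
  have "card (L (Suc r)) = card (SIGMA ys:L r. B ys)" unfolding img by (rule card_image[OF inj])
  also have "\<dots> = (\<Sum>ys\<in>L r. card (B ys))"
    by (rule card_SigmaI[OF fL]) (auto simp: B_def intro: finite_subset[OF _ fU])
  also have "\<dots> = card (L r) * ((card \<D> - r) * l)" using cardB by simp
  finally show ?case using Suc.IH by (simp add: L_def algebra_simps)
qed

lemma prod_rev_fact: "(\<Prod>i<n. (n - i)) = fact n"
  using fact_prod_rev[of n, where 'a=nat] by (simp add: atLeast0LessThan)

context cyc
begin

lemma card_W: "card W = fact (g - 1) * l ^ (g - 1)"
proof -
  define Ox where "Ox = orbit \<sigma> x"
  define \<D> where "\<D> = \<C> - {Ox}"
  have fD: "finite \<D>" using fC by (simp add: \<D>_def)
  have cD: "card \<D> = g - 1" using xC gdef fC by (simp add: \<D>_def Ox_def)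
  have cDD: "D \<in> \<D> \<Longrightarrow> card D = l" for D using Csub by (auto simp: \<D>_def)
  have disjC: "pairwise disjnt \<C>" unfolding pairwise_def disjnt_def
  proof (intro ballI impI)
    fix C D assume C: "C \<in> \<C>" and D: "D \<in> \<C>" and ne: "C \<noteq> D"
    obtain z1 where "C = orbit \<sigma> z1" using inC[OF C] by blast
    moreover obtain z2 where "D = orbit \<sigma> z2" using inC[OF D] by blast
    ultimately show "C \<inter> D = {}" using ne orbits_disj[OF \<sigma>perm] by blast
  qed
  have disj: "pairwise disjnt \<D>" using disjC by (auto simp: \<D>_def pairwise_def)
  have inO: "y \<in> T \<Longrightarrow> y \<in> Ox \<longleftrightarrow> orbit \<sigma> y = Ox" for y
    unfolding Ox_def using orbit_eq_of_mem[OF \<sigma>perm] self_in_orbit'[OF \<sigma>perm] by metis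
  have U: "T - Ox = \<Union>\<D>"
  proof
    show "T - Ox \<subseteq> \<Union>\<D>"
    proof
      fix y assume y: "y \<in> T - Ox"
      then have "orbit \<sigma> y \<in> \<C>" "orbit \<sigma> y \<noteq> Ox" using orbT inO by auto
      then show "y \<in> \<Union>\<D>" using self_in_orbit'[OF \<sigma>perm, of y] by (auto simp: \<D>_def)
    qed
    show "\<Union>\<D> \<subseteq> T - Ox"
    proof
      fix y assume "y \<in> \<Union>\<D>"
      then obtain D where D: "D \<in> \<C>" "D \<noteq> Ox" "y \<in> D" by (auto simp: \<D>_def)
      have "Ox \<in> \<C>" using xC by (simp add: Ox_def)
      then have "D \<inter> Ox = {}" using disjC D unfolding pairwise_def disjnt_def by blast
      then show "y \<in> T - Ox" using D Tdef by blast
    qed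
  qed
  have f: "y \<in> T - Ox \<Longrightarrow> orbit \<sigma> y \<in> \<D> \<and> y \<in> orbit \<sigma> y" for y
    using orbT inO self_in_orbit'[OF \<sigma>perm] by (auto simp: \<D>_def)
  have "W = {ys. length ys = g - 1 \<and> set ys \<subseteq> T - Ox \<and> distinct (map (orbit \<sigma>) ys)}"
  proof -
    have "(set ys \<subseteq> T \<and> distinct (map (orbit \<sigma>) (x # ys))) \<longleftrightarrow>
          (set ys \<subseteq> T - Ox \<and> distinct (map (orbit \<sigma>) ys))" for ys
    proof -
      have "set ys \<subseteq> T \<Longrightarrow> (Ox \<notin> orbit \<sigma> ` set ys \<longleftrightarrow> set ys \<inter> Ox = {})"
        using inO by blast
      then show ?thesis by (auto simp: Ox_def)
    qed
    then show ?thesis unfolding W_def by blast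
  qed
  also have "card \<dots> = (\<Prod>i<g - 1. (card \<D> - i)) * l ^ (g - 1)"
    by (rule count_lists[OF fD cDD l0 disj U f])
  also have "\<dots> = fact (g - 1) * l ^ (g - 1)" by (simp only: cD prod_rev_fact)
  finally show ?thesis .
qed

lemma card_XT': "card (XT k T \<sigma> x) = fact (g - 1) * l ^ (g - 1)"
  using card_XT card_W by simp

lemma sum_XT: "(\<Sum>\<tau>\<in>XT k T \<sigma> x. sg \<tau>) = (-1) ^ (l * g + 1) * fact (g - 1) * real l ^ (g - 1)"
proof -
  have "sg \<tau> = (-1) ^ (l * g + 1)" if "\<tau> \<in> XT k T \<sigma> x" for \<tau>
    using XT_structure(2)[OF fS \<sigma> TS xT that] cardT by simp
  then have "(\<Sum>\<tau>\<in>XT k T \<sigma> x. sg \<tau>) = real (card (XT k T \<sigma> x)) * (-1) ^ (l * g + 1)"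
    by simp
  then show ?thesis using card_XT' by simp
qed

end

definition ctm :: "('a \<Rightarrow> 'a) \<Rightarrow> 'a set \<Rightarrow> (nat \<Rightarrow>\<^sub>0 nat)" where
  "ctm \<sigma> S = (\<Sum>C\<in>orbs \<sigma> S. Poly_Mapping.single (card C) 1)"

lemma lookup_ctm: "finite S \<Longrightarrow> lk (ctm \<sigma> S) i = card {C \<in> orbs \<sigma> S. card C = i}"
proof -
  assume fS: "finite S"
  have fO: "finite (orbs \<sigma> S)" using fS by (simp add: orbs_def)
  have "lk (ctm \<sigma> S) i = (\<Sum>C\<in>orbs \<sigma> S. if card C = i then 1 else 0)"
    unfolding ctm_def lookup_sum lookup_single when_def by (simp add: eq_commute)
  also have "\<dots> = card {C \<in> orbs \<sigma> S. card C = i}"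
    using fO by (simp add: sum.If_cases Int_def)
  finally show ?thesis .
qed

lemma card_fam:
  assumes fA: "finite A" and a: "a \<in> A" and g: "g \<ge> 1"
  shows "card {B. B \<subseteq> A \<and> a \<in> B \<and> card B = g} = (card A - 1) choose (g - 1)"
proof -
  have "{B. B \<subseteq> A \<and> a \<in> B \<and> card B = g} = insert a ` {B. B \<subseteq> A - {a} \<and> card B = g - 1}"
  proof
    show "{B. B \<subseteq> A \<and> a \<in> B \<and> card B = g} \<subseteq> insert a ` {B. B \<subseteq> A - {a} \<and> card B = g - 1}"
    proof
      fix B assume B: "B \<in> {B. B \<subseteq> A \<and> a \<in> B \<and> card B = g}"
      then have "B = insert a (B - {a})" by auto
      moreover have "card (B - {a}) = g - 1" using B fA finite_subset by (auto simp: card_Diff_singleton)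
      ultimately show "B \<in> insert a ` {B. B \<subseteq> A - {a} \<and> card B = g - 1}" using B by blast
    qed
    show "insert a ` {B. B \<subseteq> A - {a} \<and> card B = g - 1} \<subseteq> {B. B \<subseteq> A \<and> a \<in> B \<and> card B = g}"
    proof
      fix B' assume "B' \<in> insert a ` {B. B \<subseteq> A - {a} \<and> card B = g - 1}"
      then obtain B where B: "B \<subseteq> A - {a}" "card B = g - 1" "B' = insert a B" by blast
      have "finite B" using B(1) fA finite_subset by blast
      moreover have "a \<notin> B" using B(1) by blast
      ultimately have "card B' = g" using B g by simp
      then show "B' \<in> {B. B \<subseteq> A \<and> a \<in> B \<and> card B = g}" using B a by blast
    qed
  qed
  moreover have "inj_on (insert a) {B. B \<subseteq> A - {a} \<and> card B = g - 1}"
    by (rule inj_onI) blast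
  ultimately have "card {B. B \<subseteq> A \<and> a \<in> B \<and> card B = g} = card {B. B \<subseteq> A - {a} \<and> card B = g - 1}"
    by (simp add: card_image)
  also have "\<dots> = card (A - {a}) choose (g - 1)" using fA by (simp add: n_subsets)
  finally show ?thesis using a fA by simp
qed

lemma coeff_id:
  assumes g: "g \<ge> 1" and c: "c \<ge> 1"
  shows "real ((c - 1) choose (g - 1)) * ((-1) ^ (l * g + 1) * fact (g - 1) * real l ^ (g - 1))
     = (if g \<le> c then cf l c g else 0)"
proof (cases "g \<le> c")
  case True
  then have "g - 1 \<le> c - 1" by simp
  then have "real ((c - 1) choose (g - 1)) = fact (c - 1) / (fact (g - 1) * fact (c - 1 - (g - 1)))"
    by (rule binomial_fact)
  moreover have "c - 1 - (g - 1) = c - g" using g by simp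
  ultimately show ?thesis using True by (simp add: cf_def field_simps)
next
  case False
  then have "(c - 1) choose (g - 1) = 0" using g c by simp
  then show ?thesis using False by simp
qed

lemma orbs_restrict:
  assumes fS: "finite S" and \<sigma>: "\<sigma> permutes S" and Csub: "\<C> \<subseteq> orbs \<sigma> S"
  defines "T \<equiv> \<Union>\<C>"
  shows "orbs (perm_restrict \<sigma> (S - T)) (S - T) = orbs \<sigma> S - \<C>"
    and "perm_restrict \<sigma> (S - T) permutes (S - T)"
proof -
  have \<sigma>perm: "permutation \<sigma>" using perm_of_permutes[OF \<sigma> fS] .
  have TS: "T \<subseteq> S" using Csub permutes_orbit_subset[OF \<sigma>] by (auto simp: T_def orbs_def)
  have inT: "y \<in> S \<Longrightarrow> y \<in> T \<longleftrightarrow> orbit \<sigma> y \<in> \<C>" for y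
  proof
    assume y: "y \<in> S" "y \<in> T"
    then obtain C where C: "C \<in> \<C>" "y \<in> C" by (auto simp: T_def)
    then obtain z where "C = orbit \<sigma> z" using Csub by (auto simp: orbs_def)
    then have "orbit \<sigma> y = C" using orbit_eq_of_mem[OF \<sigma>perm] C by blast
    then show "orbit \<sigma> y \<in> \<C>" using C by simp
  next
    assume "orbit \<sigma> y \<in> \<C>"
    then show "y \<in> T" using self_in_orbit'[OF \<sigma>perm, of y] by (auto simp: T_def)
  qed
  have invST: "inv_set \<sigma> (S - T)"
    unfolding inv_set_def
  proof
    fix y assume y: "y \<in> S - T"
    have "\<sigma> y \<in> S" using y permutes_in_image[OF \<sigma>] by simp
    moreover have "orbit \<sigma> (\<sigma> y) = orbit \<sigma> y"
      by (rule permutation_orbit_step[OF \<sigma>perm])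
    ultimately show "\<sigma> y \<in> S - T" using y inT by auto
  qed
  show "perm_restrict \<sigma> (S - T) permutes (S - T)"
    by (rule perm_restrict_permutes[OF \<sigma> fS _ invST]) auto
  have oe: "orbit (perm_restrict \<sigma> (S - T)) y = orbit \<sigma> y" if y: "y \<in> S - T" for y
  proof (rule orbit_cong0[OF y])
    show "perm_restrict \<sigma> (S - T) \<in> S - T \<rightarrow> S - T"
      using invST by (auto simp: inv_set_def perm_restrict_def)
    show "\<And>z. z \<in> S - T \<Longrightarrow> perm_restrict \<sigma> (S - T) z = \<sigma> z" by (simp add: perm_restrict_def)
  qed
  show "orbs (perm_restrict \<sigma> (S - T)) (S - T) = orbs \<sigma> S - \<C>"
  proof
    show "orbs (perm_restrict \<sigma> (S - T)) (S - T) \<subseteq> orbs \<sigma> S - \<C>"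
    proof
      fix C assume "C \<in> orbs (perm_restrict \<sigma> (S - T)) (S - T)"
      then obtain y where y: "y \<in> S - T" "C = orbit (perm_restrict \<sigma> (S - T)) y" by (auto simp: orbs_def)
      then have "C = orbit \<sigma> y" using oe by simp
      then show "C \<in> orbs \<sigma> S - \<C>" using y inT by (auto simp: orbs_def)
    qed
    show "orbs \<sigma> S - \<C> \<subseteq> orbs (perm_restrict \<sigma> (S - T)) (S - T)"
    proof
      fix C assume C: "C \<in> orbs \<sigma> S - \<C>"
      then obtain y where y: "y \<in> S" "C = orbit \<sigma> y" by (auto simp: orbs_def)
      then have "y \<notin> T" using inT C by auto
      then show "C \<in> orbs (perm_restrict \<sigma> (S - T)) (S - T)" using y oe by (auto simp: orbs_def)
    qed
  qed
qed

lemma funpow_id': "(id ^^ n) = id"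
  by (induction n) simp_all

lemma ctm_restrict:
  assumes fS: "finite S" and \<sigma>: "\<sigma> permutes S" and Csub: "\<C> \<subseteq> {C \<in> orbs \<sigma> S. card C = l}"
  shows "ctm (perm_restrict \<sigma> (S - \<Union>\<C>)) (S - \<Union>\<C>) = ctm \<sigma> S - Poly_Mapping.single l (card \<C>)"
proof (rule poly_mapping_eqI)
  fix i
  have C': "\<C> \<subseteq> orbs \<sigma> S" using Csub by auto
  have fO: "finite (orbs \<sigma> S)" using fS by (simp add: orbs_def)
  have e: "{C \<in> orbs \<sigma> S - \<C>. card C = i} = {C \<in> orbs \<sigma> S. card C = i} - {C \<in> \<C>. card C = i}" by blast
  have sub: "{C \<in> \<C>. card C = i} \<subseteq> {C \<in> orbs \<sigma> S. card C = i}" using C' by blast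
  have fin: "finite {C \<in> \<C>. card C = i}" using finite_subset[OF C' fO] by simp
  have "lk (ctm (perm_restrict \<sigma> (S - \<Union>\<C>)) (S - \<Union>\<C>)) i = card {C \<in> orbs \<sigma> S - \<C>. card C = i}"
    using lookup_ctm[of "S - \<Union>\<C>"] orbs_restrict(1)[OF fS \<sigma> C'] fS by simp
  also have "\<dots> = card {C \<in> orbs \<sigma> S. card C = i} - card {C \<in> \<C>. card C = i}"
    unfolding e by (rule card_Diff_subset[OF fin sub])
  also have "card {C \<in> \<C>. card C = i} = (if i = l then card \<C> else 0)"
  proof (cases "i = l")
    case True
    then have E: "{C \<in> \<C>. card C = i} = \<C>" using Csub by auto
    show ?thesis unfolding E using True by simp
  next
    case False
    then have E: "{C \<in> \<C>. card C = i} = {}" using Csub by auto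
    show ?thesis unfolding E using False by simp
  qed
  finally show "lk (ctm (perm_restrict \<sigma> (S - \<Union>\<C>)) (S - \<Union>\<C>)) i =
      lk (ctm \<sigma> S - Poly_Mapping.single l (card \<C>)) i"
    using lookup_ctm[OF fS] by (simp add: lookup_minus lookup_single when_def)
qed

theorem MT:
  fixes k N :: nat
  assumes k: "k > 0"
  shows "finite S \<Longrightarrow> \<sigma> permutes S \<Longrightarrow> card S \<le> N \<Longrightarrow> Rs k S \<sigma> = aco k N (ctm \<sigma> S)"
proof (induction "card S" arbitrary: S \<sigma> rule: less_induct)
  case less
  note fS = less.prems(1) and \<sigma> = less.prems(2) and SN = less.prems(3)
  show ?case
  proof (cases "S = {}")
    case True
    then have \<sigma>id: "\<sigma> = id" using \<sigma> by simp
    have "roots k S \<sigma> = {id}" using True \<sigma>id by (auto simp: roots_def funpow_id')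
    then have "Rs k S \<sigma> = 1" by (simp add: Rs_def sg_def)
    moreover have "ctm \<sigma> S = 0" using True by (simp add: ctm_def orbs_def)
    ultimately show ?thesis using aco_zero[OF k] by simp
  next
    case False
    then obtain x where xS: "x \<in> S" by blast
    have \<sigma>perm: "permutation \<sigma>" using perm_of_permutes[OF \<sigma> fS] .
    define O' where "O' = orbit \<sigma> x"
    define l where "l = card O'"
    have OS: "O' \<subseteq> S" using permutes_orbit_subset[OF \<sigma> xS] by (simp add: O'_def)
    have l0: "l > 0" using orbit_card_pos[OF \<sigma>perm] by (simp add: l_def O'_def)
    have lN: "l \<le> N" using card_mono[OF fS OS] SN by (simp add: l_def)
    define m where "m = ctm \<sigma> S"
    define Ol where "Ol = {C \<in> orbs \<sigma> S. card C = l}"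
    define c where "c = card Ol"
    have fOl: "finite Ol" using fS by (simp add: Ol_def orbs_def)
    have OOl: "O' \<in> Ol" using xS by (simp add: Ol_def orbs_def O'_def l_def)
    have mlc: "lk m l = c" using lookup_ctm[OF fS] by (simp add: m_def c_def Ol_def)
    have "Ol \<noteq> {}" using OOl by blast
    then have "card Ol > 0" using fOl by (simp add: card_gt_0_iff)
    then have c1: "c \<ge> 1" by (simp add: c_def)
    have rec0: "aco k N m = (\<Sum>g\<in>Gk k l. if g \<le> lk m l then cf l (lk m l) g * aco k N (m - Poly_Mapping.single l g) else 0)"
      by (rule aco_rec[OF k _ lN]) (use l0 c1 mlc in auto)
    have rec: "aco k N m = (\<Sum>g\<in>Gk k l. if g \<le> c then cf l c g * aco k N (m - Poly_Mapping.single l g) else 0)"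
      using rec0 unfolding mlc .
    define FT where "FT T = (if x \<in> T then (\<Sum>\<tau>\<in>XT k T \<sigma> x. sg \<tau>) * Rs k (S - T) (perm_restrict \<sigma> (S - T)) else 0)" for T
    define \<F> where "\<F> = {\<C>. \<C> \<subseteq> Ol \<and> O' \<in> \<C> \<and> card \<C> \<in> Gk k l}"
    define V where "V g = (-1) ^ (l * g + 1) * fact (g - 1) * real l ^ (g - 1) * aco k N (m - Poly_Mapping.single l g)" for g
    have fR: "finite (roots k S \<sigma>)" by (rule finite_roots[OF fS])
    have fF: "finite \<F>" by (rule finite_subset[of _ "Pow Ol"]) (use fOl in \<open>auto simp: \<F>_def\<close>)
    have "Rs k S \<sigma> = (\<Sum>T\<in>Pow S. \<Sum>\<tau>\<in>{\<tau>\<in>roots k S \<sigma>. orbit \<tau> x = T}. sg \<tau>)"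
      unfolding Rs_def
    proof (rule sum.group[symmetric, OF fR])
      show "finite (Pow S)" using fS by simp
      show "(\<lambda>\<tau>. orbit \<tau> x) ` roots k S \<sigma> \<subseteq> Pow S"
      proof
        fix T assume "T \<in> (\<lambda>\<tau>. orbit \<tau> x) ` roots k S \<sigma>"
        then obtain \<tau> where "\<tau> permutes S" "T = orbit \<tau> x" by (auto simp: roots_def)
        then show "T \<in> Pow S" using permutes_orbit_subset[OF _ xS] by blast
      qed
    qed
    also have "\<dots> = (\<Sum>T\<in>Pow S. FT T)"
    proof (rule sum.cong[OF refl])
      fix T assume T: "T \<in> Pow S"
      show "(\<Sum>\<tau>\<in>{\<tau>\<in>roots k S \<sigma>. orbit \<tau> x = T}. sg \<tau>) = FT T"
      proof (cases "x \<in> T")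
        case True
        then show ?thesis using decomp[OF fS \<sigma> _ True] T by (simp add: FT_def)
      next
        case False
        have E: "{\<tau>\<in>roots k S \<sigma>. orbit \<tau> x = T} = {}"
        proof -
          have "\<tau> \<in> roots k S \<sigma> \<Longrightarrow> x \<in> orbit \<tau> x" for \<tau>
            using self_in_orbit'[OF perm_of_permutes[OF _ fS]] by (auto simp: roots_def)
          then show ?thesis using False by blast
        qed
        show ?thesis unfolding E using False by (simp add: FT_def)
      qed
    qed
    also have "\<dots> = (\<Sum>T\<in>Union ` \<F>. FT T)"
    proof (rule sum.mono_neutral_right)
      show "finite (Pow S)" using fS by simp
      show "Union ` \<F> \<subseteq> Pow S"
      proof
        fix T assume "T \<in> Union ` \<F>"
        then obtain \<C> where HC: "\<C> \<in> \<F>" "T = \<Union>\<C>" by blast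
        have "D \<subseteq> S" if D: "D \<in> \<C>" for D
        proof -
          have "D \<in> orbs \<sigma> S" using HC(1) D by (auto simp: \<F>_def Ol_def)
          then obtain z where "z \<in> S" "D = orbit \<sigma> z" by (auto simp: orbs_def)
          then show ?thesis using permutes_orbit_subset[OF \<sigma>] by simp
        qed
        then show "T \<in> Pow S" using HC by blast
      qed
      show "\<forall>T\<in>Pow S - Union ` \<F>. FT T = 0"
      proof
        fix T assume T: "T \<in> Pow S - Union ` \<F>"
        show "FT T = 0"
        proof (rule ccontr)
          assume nz: "FT T \<noteq> 0"
          then have xT: "x \<in> T" by (simp add: FT_def split: if_splits)
          have "XT k T \<sigma> x \<noteq> {}"
          proof
            assume E: "XT k T \<sigma> x = {}"
            have "FT T = 0" unfolding FT_def E by simp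
            then show False using nz by simp
          qed
          then obtain \<tau> where \<tau>: "\<tau> \<in> XT k T \<sigma> x" by blast
          have TS: "T \<subseteq> S" using T by blast
          obtain \<C> where "\<C> \<subseteq> {C \<in> orbs \<sigma> S. card C = l}" "orbit \<sigma> x \<in> \<C>" "card \<C> \<in> Gk k l" "T = \<Union>\<C>"
            using XT_structure(1)[OF fS \<sigma> TS xT \<tau>] by (auto simp: l_def O'_def)
          then have "T \<in> Union ` \<F>" by (auto simp: \<F>_def Ol_def O'_def)
          then have inU: "T \<in> Union ` \<F>" .
          show False by (rule DiffD2[OF T inU])
        qed
      qed
    qed
    also have "\<dots> = (\<Sum>\<C>\<in>\<F>. FT (\<Union>\<C>))"
    proof (rule sum.reindex[unfolded comp_def])
      show "inj_on Union \<F>"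
      proof (rule inj_onI)
        have key: "C \<in> \<C>2" if C1: "\<C>1 \<in> \<F>" and C2: "\<C>2 \<in> \<F>" and eq: "\<Union>\<C>1 = \<Union>\<C>2" and C: "C \<in> \<C>1"
          for \<C>1 \<C>2 C
        proof -
          obtain z where z: "z \<in> S" "C = orbit \<sigma> z" using C C1 by (auto simp: \<F>_def Ol_def orbs_def)
          have "z \<in> C" using z self_in_orbit'[OF \<sigma>perm] by simp
          then obtain D where D: "D \<in> \<C>2" "z \<in> D" using eq C by blast
          then obtain w where w: "D = orbit \<sigma> w" using C2 by (auto simp: \<F>_def Ol_def orbs_def)
          then have "D = C" using D z orbit_eq_of_mem[OF \<sigma>perm] by blast
          then show ?thesis using D by simp
        qed
        fix \<C>1 \<C>2 assume "\<C>1 \<in> \<F>" "\<C>2 \<in> \<F>" "\<Union>\<C>1 = \<Union>\<C>2"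
        then show "\<C>1 = \<C>2" using key[of \<C>1 \<C>2] key[of \<C>2 \<C>1] by blast
      qed
    qed
    also have "\<dots> = (\<Sum>\<C>\<in>\<F>. V (card \<C>))"
    proof (rule sum.cong[OF refl])
      fix \<C> assume C: "\<C> \<in> \<F>"
      then have Csub: "\<C> \<subseteq> {C \<in> orbs \<sigma> S. card C = l}" and OC: "O' \<in> \<C>" and CG: "card \<C> \<in> Gk k l"
        by (auto simp: \<F>_def Ol_def)
      interpret cyc k S \<sigma> x l \<C> "\<Union>\<C>" "card \<C>"
        by unfold_locales (use k fS \<sigma> Csub OC CG in \<open>auto simp: O'_def\<close>)
      have sX: "(\<Sum>\<tau>\<in>XT k (\<Union>\<C>) \<sigma> x. sg \<tau>) = (-1) ^ (l * card \<C> + 1) * fact (card \<C> - 1) * real l ^ (card \<C> - 1)"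
        by (rule sum_XT)
      have "S - \<Union>\<C> \<subset> S" using xT xS by blast
      then have ST: "card (S - \<Union>\<C>) < card S" by (rule psubset_card_mono[OF fS])
      have perm': "perm_restrict \<sigma> (S - \<Union>\<C>) permutes (S - \<Union>\<C>)"
        using orbs_restrict(2)[OF fS \<sigma>, of \<C>] Csub by auto
      have "Rs k (S - \<Union>\<C>) (perm_restrict \<sigma> (S - \<Union>\<C>)) = aco k N (ctm (perm_restrict \<sigma> (S - \<Union>\<C>)) (S - \<Union>\<C>))"
        using less.hyps[OF ST _ perm'] fS SN ST by simp
      also have "\<dots> = aco k N (m - Poly_Mapping.single l (card \<C>))"
        using ctm_restrict[OF fS \<sigma> Csub] by (simp add: m_def)
      finally show "FT (\<Union>\<C>) = V (card \<C>)" using xT sX by (simp add: FT_def V_def)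
    qed
    also have "\<dots> = (\<Sum>g\<in>Gk k l. \<Sum>\<C>\<in>{\<C> \<in> \<F>. card \<C> = g}. V (card \<C>))"
    proof (rule sum.group[symmetric, OF fF Gk_finite[OF k]])
      show "card ` \<F> \<subseteq> Gk k l" by (auto simp: \<F>_def)
    qed
    also have "\<dots> = (\<Sum>g\<in>Gk k l. if g \<le> c then cf l c g * aco k N (m - Poly_Mapping.single l g) else 0)"
    proof (rule sum.cong[OF refl])
      fix g assume g: "g \<in> Gk k l"
      have g1: "g \<ge> 1" using Gk_props[OF k g] by simp
      have "{\<C> \<in> \<F>. card \<C> = g} = {B. B \<subseteq> Ol \<and> O' \<in> B \<and> card B = g}" using g by (auto simp: \<F>_def)
      then have cardF: "card {\<C> \<in> \<F>. card \<C> = g} = (c - 1) choose (g - 1)"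
        using card_fam[OF fOl OOl g1] by (simp add: c_def)
      have "(\<Sum>\<C>\<in>{\<C> \<in> \<F>. card \<C> = g}. V (card \<C>)) = real (card {\<C> \<in> \<F>. card \<C> = g}) * V g"
        by simp
      also have "\<dots> = real ((c - 1) choose (g - 1)) * ((-1) ^ (l * g + 1) * fact (g - 1) * real l ^ (g - 1))
                       * aco k N (m - Poly_Mapping.single l g)"
        by (simp add: cardF V_def mult.assoc)
      also have "\<dots> = (if g \<le> c then cf l c g * aco k N (m - Poly_Mapping.single l g) else 0)"
        using coeff_id[OF g1 c1, of l] by simp
      finally show "(\<Sum>\<C>\<in>{\<C> \<in> \<F>. card \<C> = g}. V (card \<C>)) = (if g \<le> c then cf l c g * aco k N (m - Poly_Mapping.single l g) else 0)" .
    qed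
    also have "\<dots> = aco k N m" using rec by simp
    finally show ?thesis by (simp add: m_def)
  qed
qed

theorem lemma3:
  fixes n k N :: nat and c :: "nat \<Rightarrow> nat" and \<sigma> :: "nat \<Rightarrow> nat"
  assumes "n > 0" and "k > 0"
    and "n = (\<Sum>i\<in>{1..n}. i * c i)"
    and "\<sigma> permutes {1..n}"
    and "\<forall>i\<in>{1..n}. cycle_count \<sigma> {1..n} i = c i"
    and "N \<ge> n"
  shows "exp_coeff (genF k N) (\<Sum>i\<in>{1..n}. Poly_Mapping.single i (c i))
           * (\<Prod>i\<in>{1..n}. fact (c i))
         = real (card {\<tau>. \<tau> permutes {1..n} \<and> evenperm \<tau> \<and> \<tau> ^^ k = \<sigma>})
           - real (card {\<tau>. \<tau> permutes {1..n} \<and> \<not> evenperm \<tau> \<and> \<tau> ^^ k = \<sigma>})"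
proof -
  note k = assms(2) and \<sigma> = assms(4) and cc = assms(5) and Nn = assms(6)
  define S where "S = {1..n}"
  define M where "M = (\<Sum>i\<in>{1..n}. Poly_Mapping.single i (c i))"
  have fS: "finite S" by (simp add: S_def)
  have cS: "card S \<le> N" using Nn by (simp add: S_def)
  have \<sigma>S: "\<sigma> permutes S" using \<sigma> by (simp add: S_def)
  have \<sigma>perm: "permutation \<sigma>" using perm_of_permutes[OF \<sigma>S fS] .
  have lkM: "lk M i = (if i \<in> {1..n} then c i else 0)" for i
    unfolding M_def lookup_sum lookup_single when_def by (simp add: sum.delta)
  have ctmM: "ctm \<sigma> S = M"
  proof (rule poly_mapping_eqI)
    fix i
    have e: "{C \<in> orbs \<sigma> S. card C = i} = {C. \<exists>x\<in>S. C = orbit \<sigma> x \<and> card C = i}"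
      by (auto simp: orbs_def)
    show "lk (ctm \<sigma> S) i = lk M i"
    proof (cases "i \<in> {1..n}")
      case True
      then show ?thesis using lookup_ctm[OF fS] e cc lkM by (simp add: cycle_count_def S_def)
    next
      case False
      have E: "{C \<in> orbs \<sigma> S. card C = i} = {}"
      proof -
        have "card C \<in> {1..n}" if HC: "C \<in> orbs \<sigma> S" for C
        proof -
          obtain y where y: "y \<in> S" "C = orbit \<sigma> y" using HC by (auto simp: orbs_def)
          have "card C \<ge> 1" using orbit_card_pos[OF \<sigma>perm, of y] y by simp
          moreover have "C \<subseteq> S" using permutes_orbit_subset[OF \<sigma>S y(1)] y by simp
          then have "card C \<le> n" using card_mono[OF fS] by (fastforce simp: S_def)
          ultimately show ?thesis by simp
        qed
        then show ?thesis using False by blast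
      qed
      show ?thesis unfolding lookup_ctm[OF fS] E using False lkM[of i] by auto
    qed
  qed
  have pfM: "pf M = (\<Prod>i\<in>{1..n}. fact (c i))"
  proof -
    have "ks M \<subseteq> {1..n}" using lkM by (auto simp: in_keys_iff split: if_splits)
    then have "pf M = (\<Prod>i\<in>{1..n}. fact (lk M i))" by (rule pf_superset[OF finite_atLeastAtMost])
    also have "\<dots> = (\<Prod>i\<in>{1..n}. fact (c i))" using lkM by simp
    finally show ?thesis .
  qed
  have "exp_coeff (genF k N) M * (\<Prod>i\<in>{1..n}. fact (c i)) = aco k N (ctm \<sigma> S)"
    unfolding ctmM aco_def pfM ..
  also have "\<dots> = Rs k S \<sigma>" using MT[OF k fS \<sigma>S cS] by simp
  also have "\<dots> = (\<Sum>\<tau>\<in>roots k S \<sigma>. if evenperm \<tau> then 1 else -1)" by (simp add: Rs_def sg_def)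
  also have "\<dots> = (\<Sum>\<tau>\<in>roots k S \<sigma> \<inter> {\<tau>. evenperm \<tau>}. 1) + (\<Sum>\<tau>\<in>roots k S \<sigma> \<inter> - {\<tau>. evenperm \<tau>}. -1)"
    by (rule sum.If_cases[OF finite_roots[OF fS]])
  also have "\<dots> = real (card (roots k S \<sigma> \<inter> {\<tau>. evenperm \<tau>})) - real (card (roots k S \<sigma> \<inter> - {\<tau>. evenperm \<tau>}))"
    by simp
  also have "roots k S \<sigma> \<inter> {\<tau>. evenperm \<tau>} = {\<tau>. \<tau> permutes {1..n} \<and> evenperm \<tau> \<and> \<tau> ^^ k = \<sigma>}"
    by (auto simp: roots_def S_def)
  also have "roots k S \<sigma> \<inter> - {\<tau>. evenperm \<tau>} = {\<tau>. \<tau> permutes {1..n} \<and> \<not> evenperm \<tau> \<and> \<tau> ^^ k = \<sigma>}"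
    by (auto simp: roots_def S_def)
  finally show ?thesis by (simp add: M_def)
qed

end
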